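(* Let $A=\mathbb{C}[x_1,x_2,\dots]$ with $x_i$ of degree $i$, and let $d$ be the derivation with $dx_1=0$, $dx_i=x_{i-1}$ ($i>1$), extended termwise to formal power series in the $x_i$. Let $n\ge\ell\ge1$ and $\beta=(\beta_1,\dots,\beta_\ell)\in B^{(\ell)}_n(0)$, and for $i\ge0$ put $\beta(i)=(\beta_1+i,\beta_2,\dots,\beta_\ell)\in B^{(\ell)}_{n+i}(i)$. Then the formal power series $$\tilde g_\beta(\vec x)=\sum_{i\ge0} g_{\beta(i)}(\vec x)=g_\beta(\vec x)+g_{\beta(1)}(\vec x)+g_{\beta(2)}(\vec x)+\cdots$$ is a lift of $g_\beta(\vec x)\in J_n$, i.e. its lowest-degree part is $g_\beta(\vec x)$ and $d\,\tilde g_\beta=\tilde g_\beta$.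
   Context: $J=\mathrm{Ker}(d)\subset A$ and $J_n$ is its degree-$n$ part. For $n\ge\ell\ge1$, $B^{(\ell)}_n=\{\beta\in\mathbb{Z}^\ell:\beta_1,\dots,\beta_{\ell-1}\ge0,\ \beta_\ell\ge1,\ \beta_1+2\beta_2+\cdots+\ell\beta_\ell=n\}$. For $i\ge0$ and $n\ge\ell>1$, $B^{(\ell)}_n(i)=\{\beta\in B^{(\ell)}_n:\beta_1=i\}$; for $\ell=1$, $B^{(1)}_n(i)=\{(i+1)\}$ if $n=i+1$ and $\emptyset$ otherwise. For $\vec k=(k_1,\dots,k_\ell)$, $e^\beta(\vec k)=e_1(\vec k)^{\beta_1}\cdots e_\ell(\vec k)^{\beta_\ell}$ with $e_j$ the elementary symmetric polynomials, and $g_\beta(\vec x)\in A$ for $\beta\in B^{(\ell)}_n$ is defined by $$\sum_{\substack{i_1,\dots,i_\ell\ge1\\ i_1+\cdots+i_\ell=n}} k_1^{i_1}\cdots k_\ell^{i_\ell}x_{i_1}\cdots x_{i_\ell}=\sum_{\beta\in B^{(\ell)}_n} e^\beta(k_1,\dots,k_\ell)\,g_\beta(\vec x).$$ A lift of $f\in J_n$ ($n>0$) is a formal power series $F=f+(\text{terms of degree}>n)$ in $x_1,x_2,\dots$ with $dF=F$. *)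

theory Defs
  imports Complex_Main "HOL-Library.Multiset"
begin

text \<open>A monomial x_{i_1} ... x_{i_r} is represented by the multiset {#i_1, ..., i_r#};
  a formal power series is its coefficient function. Only monomials in the variables
  with positive index are meaningful (see valid_series). Polynomials (elements of A)
  are series with finite support.\<close>

type_synonym xseries = "nat multiset \<Rightarrow> complex"

definition deg :: "nat multiset \<Rightarrow> nat" where
  "deg m = sum_mset m"

definition valid_series :: "xseries \<Rightarrow> bool" where
  "valid_series F \<longleftrightarrow> (\<forall>m. 0 \<in># m \<longrightarrow> F m = 0)"

text \<open>On a monomial, d x^m = sum over i in m with i>1 of (count m i) x^{m - i + (i-1)}.
  Hence the coefficient of the monomial m' in dF collects, for every j \<ge> 1 occurring
  in m', the contribution of the monomial m' - {#j#} + {#j+1#}.\<close>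

definition dop :: "xseries \<Rightarrow> xseries" where
  "dop F m' = (\<Sum>j\<in>set_mset m' - {0}.
      of_nat (count m' (Suc j) + 1) * F (m' - {#j#} + {#Suc j#}))"

definition J_deg :: "nat \<Rightarrow> xseries set" where
  "J_deg n = {f. valid_series f \<and> finite {m. f m \<noteq> 0}
                 \<and> (\<forall>m. f m \<noteq> 0 \<longrightarrow> deg m = n) \<and> dop f = (\<lambda>_. 0)}"

definition is_lift :: "nat \<Rightarrow> xseries \<Rightarrow> xseries \<Rightarrow> bool" where
  "is_lift n f F \<longleftrightarrow> 0 < n \<and> f \<in> J_deg n \<and> valid_series F
      \<and> (\<forall>m. deg m \<le> n \<longrightarrow> F m = f m) \<and> dop F = F"

text \<open>B^(l)_n: beta = (beta_1,...,beta_l) as a list (beta_j = beta!(j-1)).\<close>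

definition Bset :: "nat \<Rightarrow> nat \<Rightarrow> nat list set" where
  "Bset l n = {\<beta>. length \<beta> = l \<and> 1 \<le> l \<and> 1 \<le> \<beta> ! (l - 1)
                  \<and> (\<Sum>j<l. (j + 1) * \<beta> ! j) = n}"

definition Bi :: "nat \<Rightarrow> nat \<Rightarrow> nat \<Rightarrow> nat list set" where
  "Bi l n i = (if l = 1 then (if n = i + 1 then {[i + 1]} else {})
               else {\<beta> \<in> Bset l n. \<beta> ! 0 = i})"

definition esym :: "nat \<Rightarrow> complex list \<Rightarrow> complex" where
  "esym j k = (\<Sum>S\<in>{S. S \<subseteq> {..<length k} \<and> card S = j}. \<Prod>s\<in>S. k ! s)"

definition epow :: "nat list \<Rightarrow> complex list \<Rightarrow> complex" where
  "epow \<beta> k = (\<Prod>j<length \<beta>. esym (j + 1) k ^ (\<beta> ! j))"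

definition comps :: "nat \<Rightarrow> nat \<Rightarrow> nat list set" where
  "comps l n = {c. length c = l \<and> (\<forall>x\<in>set c. 1 \<le> x) \<and> sum_list c = n}"

text \<open>Coefficient of the x-monomial m in the left-hand side of the generating identity,
  evaluated at k.\<close>

definition lhs_coeff :: "nat \<Rightarrow> nat \<Rightarrow> complex list \<Rightarrow> nat multiset \<Rightarrow> complex" where
  "lhs_coeff l n k m = (\<Sum>c\<in>{c \<in> comps l n. mset c = m}. \<Prod>j<l. (k ! j) ^ (c ! j))"

text \<open>The family (g_beta)_{beta \<in> B^(l)_n} is characterised by the identity
  sum_{i} k^i x_{i_1}...x_{i_l} = sum_beta e^beta(k) g_beta(x), an identity of polynomials
  in k (equivalently, for all complex values of k_1,...,k_l), compared coefficientwise in x.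
  We set g_beta = 0 for beta outside B^(l)_n to make the family unique.\<close>

definition gfam_ok :: "nat \<Rightarrow> nat \<Rightarrow> (nat list \<Rightarrow> xseries) \<Rightarrow> bool" where
  "gfam_ok l n G \<longleftrightarrow> (\<forall>\<beta>. \<beta> \<notin> Bset l n \<longrightarrow> G \<beta> = (\<lambda>_. 0))
     \<and> (\<forall>k m. length k = l \<longrightarrow>
          lhs_coeff l n k m = (\<Sum>\<beta>\<in>Bset l n. epow \<beta> k * G \<beta> m))"

definition g :: "nat \<Rightarrow> nat \<Rightarrow> nat list \<Rightarrow> xseries" where
  "g l n \<beta> = (THE G. gfam_ok l n G) \<beta>"

definition beta_shift :: "nat list \<Rightarrow> nat \<Rightarrow> nat list" where
  "beta_shift \<beta> i = (case \<beta> of [] \<Rightarrow> [] | b # bs \<Rightarrow> (b + i) # bs)"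

definition gtilde :: "nat \<Rightarrow> nat \<Rightarrow> nat list \<Rightarrow> xseries" where
  "gtilde l n \<beta> m = (\<Sum>i. g l (n + i) (beta_shift \<beta> i) m)"

end

theory Submission
  imports Defs "HOL-Combinatorics.Permutations" "HOL-Computational_Algebra.Fundamental_Theorem_Algebra"
begin


lemma esym_0[simp]: "esym 0 k = 1"
proof -
  have eq: "{S. S \<subseteq> {..<length k} \<and> card S = 0} = {{}}"
    by (auto simp: card_eq_0_iff dest: finite_subset[OF _ finite_lessThan])
  show ?thesis unfolding esym_def eq by simp
qed

lemma esym_big: "length k < j \<Longrightarrow> esym j k = 0"
proof -
  assume a: "length k < j"
  have eq: "{S. S \<subseteq> {..<length k} \<and> card S = j} = {}"
    using a by (auto dest: card_mono[rotated, of _ "{..<length k}"])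
  show ?thesis unfolding esym_def eq by simp
qed

lemma subsets_Suc_split:
  "{S. S \<subseteq> {..<Suc n} \<and> card S = Suc j} =
   {S. S \<subseteq> {..<n} \<and> card S = Suc j} \<union> insert n ` {T. T \<subseteq> {..<n} \<and> card T = j}"
proof (intro equalityI subsetI)
  fix S assume S: "S \<in> {S. S \<subseteq> {..<Suc n} \<and> card S = Suc j}"
  show "S \<in> {S. S \<subseteq> {..<n} \<and> card S = Suc j} \<union> insert n ` {T. T \<subseteq> {..<n} \<and> card T = j}"
  proof (cases "n \<in> S")
    case True
    have fin: "finite S" using S finite_subset by blast
    have "S = insert n (S - {n})" using True by auto
    moreover have "S - {n} \<subseteq> {..<n}" using S by auto
    moreover have "card (S - {n}) = j" using S True fin by simp
    ultimately show ?thesis by blast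
  next
    case False
    then have "S \<subseteq> {..<n}" using S by (auto simp: less_Suc_eq)
    then show ?thesis using S by blast
  qed
next
  fix S assume "S \<in> {S. S \<subseteq> {..<n} \<and> card S = Suc j} \<union> insert n ` {T. T \<subseteq> {..<n} \<and> card T = j}"
  then show "S \<in> {S. S \<subseteq> {..<Suc n} \<and> card S = Suc j}"
  proof
    assume "S \<in> {S. S \<subseteq> {..<n} \<and> card S = Suc j}" then show ?thesis by auto
  next
    assume "S \<in> insert n ` {T. T \<subseteq> {..<n} \<and> card T = j}"
    then obtain T where T: "S = insert n T" "T \<subseteq> {..<n}" "card T = j" by blast
    have "finite T" using T(2) finite_subset by blast
    moreover have "n \<notin> T" using T(2) by auto
    ultimately show ?thesis using T by auto
  qed
qed

lemma esym_snoc: "esym (Suc j) (k @ [a]) = esym (Suc j) k + a * esym j k"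
proof -
  let ?n = "length k"
  let ?A = "{S. S \<subseteq> {..<?n} \<and> card S = Suc j}"
  let ?T = "{T. T \<subseteq> {..<?n} \<and> card T = j}"
  have fA: "finite ?A" by (rule finite_subset[of _ "Pow {..<?n}"]) auto
  have fT: "finite ?T" by (rule finite_subset[of _ "Pow {..<?n}"]) auto
  have disj: "?A \<inter> insert ?n ` ?T = {}" by auto
  have inj: "inj_on (insert ?n) ?T"
    by (rule inj_onI) (metis (no_types, lifting) Diff_insert_absorb lessThan_iff less_irrefl mem_Collect_eq subsetD)
  have "esym (Suc j) (k @ [a]) = (\<Sum>S\<in>?A \<union> insert ?n ` ?T. \<Prod>s\<in>S. (k @ [a]) ! s)"
    unfolding esym_def using subsets_Suc_split[of ?n j] by simp
  also have "\<dots> = (\<Sum>S\<in>?A. \<Prod>s\<in>S. (k @ [a]) ! s) + (\<Sum>S\<in>insert ?n ` ?T. \<Prod>s\<in>S. (k @ [a]) ! s)"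
    using fA fT disj by (intro sum.union_disjoint) auto
  also have "(\<Sum>S\<in>?A. \<Prod>s\<in>S. (k @ [a]) ! s) = esym (Suc j) k"
    unfolding esym_def
    by (intro sum.cong refl prod.cong) (auto simp: nth_append)
  also have "(\<Sum>S\<in>insert ?n ` ?T. \<Prod>s\<in>S. (k @ [a]) ! s) = (\<Sum>T\<in>?T. \<Prod>s\<in>insert ?n T. (k @ [a]) ! s)"
    using inj by (simp add: sum.reindex)
  also have "\<dots> = (\<Sum>T\<in>?T. a * (\<Prod>s\<in>T. k ! s))"
  proof (intro sum.cong refl)
    fix T assume T: "T \<in> ?T"
    have fin: "finite T" using T finite_subset by blast
    have nT: "?n \<notin> T" using T by auto
    have "(\<Prod>s\<in>insert ?n T. (k @ [a]) ! s) = a * (\<Prod>s\<in>T. (k @ [a]) ! s)"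
      using fin nT by simp
    also have "(\<Prod>s\<in>T. (k @ [a]) ! s) = (\<Prod>s\<in>T. k ! s)"
      using T by (intro prod.cong refl) (auto simp: nth_append)
    finally show "(\<Prod>s\<in>insert ?n T. (k @ [a]) ! s) = a * (\<Prod>s\<in>T. k ! s)" .
  qed
  also have "\<dots> = a * esym j k" unfolding esym_def by (simp add: sum_distrib_left)
  finally show ?thesis .
qed

lemma esym_snoc0: "esym j (k @ [0]) = esym j k"
  by (cases j) (simp_all add: esym_snoc)

lemma esym_full: "esym (length k) k = (\<Prod>j<length k. k ! j)"
proof (induction k rule: rev_induct)
  case Nil then show ?case by simp
next
  case (snoc a k)
  have "esym (length (k @ [a])) (k @ [a]) = esym (Suc (length k)) k + a * esym (length k) k"
    by (simp add: esym_snoc)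
  also have "esym (Suc (length k)) k = 0" by (simp add: esym_big)
  finally show ?case using snoc by (simp add: nth_append mult.commute)
qed

lemma esym_one: "esym 1 k = (\<Sum>j<length k. k ! j)"
proof (induction k rule: rev_induct)
  case Nil then show ?case by (simp add: esym_big)
next
  case (snoc a k)
  then show ?case using esym_snoc[of 0 k a] by (simp add: nth_append)
qed



definition mon :: "nat list \<Rightarrow> complex list \<Rightarrow> complex" where
  "mon v k = (\<Prod>j<length v. (k ! j) ^ (v ! j))"

lemma mon_perm:
  assumes q: "q permutes {..<length k}" and len: "length v = length k"
  shows "mon v (permute_list q k) = mon (permute_list (inv q) v) k"
proof -
  have iq: "inv q permutes {..<length k}" using q by (rule permutes_inv)
  have "mon v (permute_list q k) = (\<Prod>j<length k. (k ! q j) ^ (v ! j))"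
    unfolding mon_def using len by (intro prod.cong refl) (auto simp: permute_list_nth[OF q])
  also have "\<dots> = (\<Prod>j<length k. (\<lambda>i. (k ! i) ^ (v ! inv q i)) (q j))"
    using q by (simp add: permutes_inverses)
  also have "\<dots> = (\<Prod>i<length k. (k ! i) ^ (v ! inv q i))"
    using permutes_imp_bij[OF q] by (rule prod.reindex_bij_betw)
  also have "\<dots> = mon (permute_list (inv q) v) k"
    unfolding mon_def using len iq by (intro prod.cong refl) (auto simp: permute_list_nth)
  finally show ?thesis .
qed

lemma sum_mon_perm:
  assumes fin: "finite W" and len: "\<forall>w\<in>W. length w = l" and lk: "length k = l"
    and cl: "\<And>q w. q permutes {..<l} \<Longrightarrow> w \<in> W \<Longrightarrow> permute_list q w \<in> W"
    and q: "q permutes {..<l}"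
  shows "(\<Sum>w\<in>W. c w * mon w (permute_list q k)) = (\<Sum>w\<in>W. c (permute_list q w) * mon w k)"
proof -
  have iq: "inv q permutes {..<l}" using q by (rule permutes_inv)
  have "(\<Sum>w\<in>W. c w * mon w (permute_list q k)) = (\<Sum>w\<in>W. c w * mon (permute_list (inv q) w) k)"
    using len lk q by (intro sum.cong refl) (simp add: mon_perm)
  also have "\<dots> = (\<Sum>w\<in>W. c (permute_list q w) * mon w k)"
  proof (rule sum.reindex_bij_witness[of _ "permute_list q" "permute_list (inv q)"])
    fix a assume a: "a \<in> W"
    have "permute_list q (permute_list (inv q) a) = permute_list (inv q \<circ> q) a"
      using q a len by (simp add: permute_list_compose)
    also have "\<dots> = a" using q by (simp add: permutes_inv_o)
    finally show "permute_list q (permute_list (inv q) a) = a" .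
    show "permute_list (inv q) a \<in> W" using cl[OF iq a] .
    show "c (permute_list q (permute_list (inv q) a)) * mon (permute_list (inv q) a) k =
          c a * mon (permute_list (inv q) a) k"
      using \<open>permute_list q (permute_list (inv q) a) = a\<close> by simp
  next
    fix b assume b: "b \<in> W"
    have "permute_list (inv q) (permute_list q b) = permute_list (q \<circ> inv q) b"
      using iq b len by (simp add: permute_list_compose)
    also have "\<dots> = b" using q by (simp add: permutes_inv_o)
    finally show "permute_list (inv q) (permute_list q b) = b" .
    show "permute_list q b \<in> W" using cl[OF q b] .
  qed
  finally show ?thesis .
qed

lemma poly_indep1:
  fixes C :: "nat \<Rightarrow> complex"
  assumes fin: "finite A" and z: "\<forall>t. (\<Sum>a\<in>A. C a * t ^ a) = 0" and a: "a \<in> A"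
  shows "C a = 0"
proof -
  define p where "p = (\<Sum>b\<in>A. monom (C b) b)"
  have "\<forall>t. poly p t = 0" using z by (simp add: p_def poly_sum poly_monom)
  then have "p = 0" using poly_all_0_iff_0 by blast
  then have "coeff p a = 0" by simp
  moreover have "coeff p a = C a"
    unfolding p_def coeff_sum using fin a
    by (simp add: coeff_monom sum.delta)
  ultimately show ?thesis by simp
qed

lemma mon_Cons: "mon (b # u) (t # k) = t ^ b * mon u k"
  unfolding mon_def by (simp only: length_Cons prod.lessThan_Suc_shift) simp

lemma mon_indep:
  assumes "finite V" "\<forall>v\<in>V. length v = l"
    "\<forall>k. length k = l \<longrightarrow> (\<Sum>v\<in>V. c v * mon v k) = 0" "v \<in> V"
  shows "c v = 0"
  using assms
proof (induction l arbitrary: V c v)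
  case 0
  then have V: "V = {[]}" by auto
  have "(\<Sum>v\<in>V. c v * mon v []) = 0" using 0 by auto
  then show ?case using V 0 by (simp add: mon_def)
next
  case (Suc l)
  obtain a v' where v: "v = a # v'" using Suc.prems(2,4) by (cases v) auto
  define Vb where "Vb b = tl ` {v\<in>V. hd v = b}" for b
  have finVb: "finite (Vb b)" for b unfolding Vb_def using Suc.prems(1) by simp
  have lenVb: "\<forall>u\<in>Vb b. length u = l" for b unfolding Vb_def using Suc.prems(2) by auto
  have injtl: "inj_on tl {v\<in>V. hd v = b}" for b
  proof (rule inj_onI)
    fix x y assume "x \<in> {v\<in>V. hd v = b}" "y \<in> {v\<in>V. hd v = b}" "tl x = tl y"
    then show "x = y" using Suc.prems(2) by (metis (mono_tags, lifting) Zero_not_Suc list.collapse list.size(3) mem_Collect_eq)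
  qed
  have key: "(\<Sum>v\<in>V. c v * mon v (t # k)) = (\<Sum>b\<in>hd ` V. t ^ b * (\<Sum>u\<in>Vb b. c (b # u) * mon u k))"
    for t k
  proof -
    have "(\<Sum>v\<in>V. c v * mon v (t # k)) = (\<Sum>b\<in>hd ` V. \<Sum>v\<in>{x\<in>V. hd x = b}. c v * mon v (t # k))"
      using Suc.prems(1) by (rule sum.image_gen)
    also have "\<dots> = (\<Sum>b\<in>hd ` V. t ^ b * (\<Sum>u\<in>Vb b. c (b # u) * mon u k))"
    proof (intro sum.cong refl)
      fix b
      have "(\<Sum>v\<in>{x\<in>V. hd x = b}. c v * mon v (t # k)) = (\<Sum>v\<in>{x\<in>V. hd x = b}. t ^ b * (c (b # tl v) * mon (tl v) k))"
      proof (intro sum.cong refl)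
        fix v assume vv: "v \<in> {x\<in>V. hd x = b}"
        then have "v = b # tl v" using Suc.prems(2) by (metis (mono_tags, lifting) Zero_not_Suc list.collapse list.size(3) mem_Collect_eq)
        then show "c v * mon v (t # k) = t ^ b * (c (b # tl v) * mon (tl v) k)"
          by (metis mon_Cons mult.left_commute)
      qed
      also have "\<dots> = t ^ b * (\<Sum>v\<in>{x\<in>V. hd x = b}. c (b # tl v) * mon (tl v) k)"
        by (simp add: sum_distrib_left)
      also have "(\<Sum>v\<in>{x\<in>V. hd x = b}. c (b # tl v) * mon (tl v) k) = (\<Sum>u\<in>Vb b. c (b # u) * mon u k)"
        unfolding Vb_def using injtl by (simp add: sum.reindex)
      finally show "(\<Sum>v\<in>{x\<in>V. hd x = b}. c v * mon v (t # k)) = t ^ b * (\<Sum>u\<in>Vb b. c (b # u) * mon u k)" .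
    qed
    finally show ?thesis .
  qed
  have "(\<Sum>u\<in>Vb a. c (a # u) * mon u k) = 0" if lk: "length k = l" for k
  proof -
    have "\<forall>t. (\<Sum>b\<in>hd ` V. (\<Sum>u\<in>Vb b. c (b # u) * mon u k) * t ^ b) = 0"
    proof
      fix t
      have "(\<Sum>v\<in>V. c v * mon v (t # k)) = 0" using Suc.prems(3) lk by simp
      then show "(\<Sum>b\<in>hd ` V. (\<Sum>u\<in>Vb b. c (b # u) * mon u k) * t ^ b) = 0"
        unfolding key by (simp add: mult.commute)
    qed
    moreover have "a \<in> hd ` V" using Suc.prems(4) v by force
    ultimately show ?thesis using poly_indep1[of "hd ` V" "\<lambda>b. \<Sum>u\<in>Vb b. c (b # u) * mon u k" a] Suc.prems(1) by blast
  qed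
  moreover have "v' \<in> Vb a" unfolding Vb_def using Suc.prems(4) v by force
  ultimately have "c (a # v') = 0"
    using Suc.IH[of "Vb a" "\<lambda>u. c (a # u)" v'] finVb lenVb by blast
  then show ?case using v by simp
qed

lemma mon_snoc0:
  assumes "length v = Suc l" "length k = l"
  shows "mon v (k @ [0]) = (if v ! l = 0 then mon (take l v) k else 0)"
proof -
  have "mon v (k @ [0]) = (\<Prod>j<l. (k ! j) ^ (v ! j)) * 0 ^ (v ! l)"
    unfolding mon_def using assms by (simp add: nth_append)
  moreover have "mon (take l v) k = (\<Prod>j<l. (k ! j) ^ (v ! j))"
    unfolding mon_def using assms by simp
  ultimately show ?thesis by simp
qed

lemma restrict_sum:
  assumes fin: "finite V" and len: "\<forall>v\<in>V. length v = Suc l" and lk: "length k = l"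
  shows "(\<Sum>v\<in>V. c v * mon v (k @ [0])) = (\<Sum>u\<in>take l ` {v\<in>V. v ! l = 0}. c (u @ [0]) * mon u k)"
proof -
  have eq: "v = take l v @ [0]" if "v \<in> V" "v ! l = 0" for v
    using that len take_Suc_conv_app_nth[of l v] by simp
  have inj: "inj_on (take l) {v\<in>V. v ! l = 0}"
    by (rule inj_onI) (metis (mono_tags, lifting) eq mem_Collect_eq)
  have "(\<Sum>v\<in>V. c v * mon v (k @ [0])) = (\<Sum>v\<in>V. if v ! l = 0 then c v * mon (take l v) k else 0)"
    using len lk by (intro sum.cong refl) (simp add: mon_snoc0)
  also have "\<dots> = (\<Sum>v\<in>{v\<in>V. v ! l = 0}. c v * mon (take l v) k)"
    using fin by (simp add: sum.inter_filter)
  also have "\<dots> = (\<Sum>v\<in>{v\<in>V. v ! l = 0}. c (take l v @ [0]) * mon (take l v) k)"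
    using eq by (intro sum.cong refl) auto
  also have "\<dots> = (\<Sum>u\<in>take l ` {v\<in>V. v ! l = 0}. c (u @ [0]) * mon u k)"
    using inj by (simp add: sum.reindex)
  finally show ?thesis .
qed



definition inP :: "nat \<Rightarrow> nat \<Rightarrow> (complex list \<Rightarrow> complex) \<Rightarrow> bool" where
  "inP l d f \<longleftrightarrow> (\<exists>V c. finite V \<and> (\<forall>v\<in>V. length v = l \<and> sum_list v = d) \<and>
      (\<forall>k. length k = l \<longrightarrow> f k = (\<Sum>v\<in>V. c v * mon v k)))"

definition symf :: "nat \<Rightarrow> (complex list \<Rightarrow> complex) \<Rightarrow> bool" where
  "symf l f \<longleftrightarrow> (\<forall>k p. length k = l \<longrightarrow> p permutes {..<l} \<longrightarrow> f (permute_list p k) = f k)"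

definition wt :: "nat list \<Rightarrow> nat" where
  "wt \<beta> = (\<Sum>j<length \<beta>. (j + 1) * \<beta> ! j)"

definition inE :: "nat \<Rightarrow> nat \<Rightarrow> (complex list \<Rightarrow> complex) \<Rightarrow> bool" where
  "inE l d f \<longleftrightarrow> (\<exists>B c. finite B \<and> (\<forall>\<beta>\<in>B. length \<beta> = l \<and> wt \<beta> = d) \<and>
      (\<forall>k. length k = l \<longrightarrow> f k = (\<Sum>\<beta>\<in>B. c \<beta> * epow \<beta> k)))"

lemma sum_ext_if:
  fixes gg :: "'a \<Rightarrow> 'b::comm_monoid_add"
  assumes "finite V" "A \<subseteq> V"
  shows "(\<Sum>v\<in>V. if v \<in> A then gg v else 0) = sum gg A"
  using assms by (simp add: sum.inter_restrict[symmetric] Int_absorb1 Int_absorb2)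

lemma inP_cong: "inP l d f \<Longrightarrow> (\<And>k. length k = l \<Longrightarrow> f k = gg k) \<Longrightarrow> inP l d gg"
  unfolding inP_def by metis

lemma inP_zero: "inP l d (\<lambda>k. 0)"
  unfolding inP_def by (intro exI[of _ "{}"]) simp

lemma inP_add:
  assumes "inP l d f" "inP l d gg"
  shows "inP l d (\<lambda>k. f k + gg k)"
proof -
  obtain V1 c1 where 1: "finite V1" "\<forall>v\<in>V1. length v = l \<and> sum_list v = d"
    "\<forall>k. length k = l \<longrightarrow> f k = (\<Sum>v\<in>V1. c1 v * mon v k)" using assms(1) unfolding inP_def by blast
  obtain V2 c2 where 2: "finite V2" "\<forall>v\<in>V2. length v = l \<and> sum_list v = d"
    "\<forall>k. length k = l \<longrightarrow> gg k = (\<Sum>v\<in>V2. c2 v * mon v k)" using assms(2) unfolding inP_def by blast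
  define c where "c v = (if v \<in> V1 then c1 v else 0) + (if v \<in> V2 then c2 v else 0)" for v
  show ?thesis unfolding inP_def
  proof (intro exI[of _ "V1 \<union> V2"] exI[of _ c] conjI allI impI)
    show "finite (V1 \<union> V2)" using 1 2 by simp
    show "\<forall>v\<in>V1 \<union> V2. length v = l \<and> sum_list v = d" using 1 2 by blast
    fix k :: "complex list" assume k: "length k = l"
    have "(\<Sum>v\<in>V1 \<union> V2. c v * mon v k) = (\<Sum>v\<in>V1 \<union> V2. (if v \<in> V1 then c1 v * mon v k else 0) + (if v \<in> V2 then c2 v * mon v k else 0))"
      unfolding c_def by (intro sum.cong refl) (simp add: distrib_right)
    also have "\<dots> = (\<Sum>v\<in>V1. c1 v * mon v k) + (\<Sum>v\<in>V2. c2 v * mon v k)"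
      unfolding sum.distrib using 1 2 by (simp add: sum_ext_if)
    finally show "f k + gg k = (\<Sum>v\<in>V1 \<union> V2. c v * mon v k)" using 1 2 k by simp
  qed
qed

lemma inP_smult:
  assumes "inP l d f"
  shows "inP l d (\<lambda>k. a * f k)"
proof -
  obtain V c where 1: "finite V" "\<forall>v\<in>V. length v = l \<and> sum_list v = d"
    "\<forall>k. length k = l \<longrightarrow> f k = (\<Sum>v\<in>V. c v * mon v k)" using assms(1) unfolding inP_def by blast
  show ?thesis unfolding inP_def
    by (intro exI[of _ V] exI[of _ "\<lambda>v. a * c v"]) (use 1 in \<open>auto simp: sum_distrib_left mult.assoc\<close>)
qed

lemma inP_diff:
  assumes "inP l d f" "inP l d gg"
  shows "inP l d (\<lambda>k. f k - gg k)"
  using inP_add[OF assms(1) inP_smult[OF assms(2), of "-1"]] by simp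

lemma sum_list_map2: "length v = length w \<Longrightarrow> sum_list (map2 (+) v w) = sum_list v + (sum_list w :: nat)"
  by (induction v w rule: list_induct2) auto

lemma mon_add:
  assumes "length v = length k" "length w = length k"
  shows "mon v k * mon w k = mon (map2 (+) v w) k"
  unfolding mon_def using assms by (simp add: prod.distrib[symmetric] power_add)

lemma inP_mult:
  assumes "inP l a f" "inP l b gg"
  shows "inP l (a + b) (\<lambda>k. f k * gg k)"
proof -
  obtain V1 c1 where 1: "finite V1" "\<forall>v\<in>V1. length v = l \<and> sum_list v = a"
    "\<forall>k. length k = l \<longrightarrow> f k = (\<Sum>v\<in>V1. c1 v * mon v k)" using assms(1) unfolding inP_def by blast
  obtain V2 c2 where 2: "finite V2" "\<forall>v\<in>V2. length v = l \<and> sum_list v = b"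
    "\<forall>k. length k = l \<longrightarrow> gg k = (\<Sum>v\<in>V2. c2 v * mon v k)" using assms(2) unfolding inP_def by blast
  define h where "h x = map2 (+) (fst x) (snd x)" for x :: "nat list \<times> nat list"
  define c where "c u = (\<Sum>x\<in>{x\<in>V1 \<times> V2. h x = u}. c1 (fst x) * c2 (snd x))" for u
  show ?thesis unfolding inP_def
  proof (intro exI[of _ "h ` (V1 \<times> V2)"] exI[of _ c] conjI allI impI)
    show "finite (h ` (V1 \<times> V2))" using 1 2 by simp
    show "\<forall>v\<in>h ` (V1 \<times> V2). length v = l \<and> sum_list v = a + b"
      using 1 2 by (auto simp: h_def sum_list_map2)
    fix k :: "complex list" assume k: "length k = l"
    have "f k * gg k = (\<Sum>v\<in>V1. c1 v * mon v k) * (\<Sum>v\<in>V2. c2 v * mon v k)" using 1 2 k by simp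
    also have "\<dots> = (\<Sum>x\<in>V1 \<times> V2. c1 (fst x) * c2 (snd x) * mon (h x) k)"
      unfolding sum_product sum.cartesian_product
      using 1 2 k by (intro sum.cong refl) (auto simp: h_def mon_add[symmetric] mult_ac)
    also have "\<dots> = (\<Sum>u\<in>h ` (V1 \<times> V2). \<Sum>x\<in>{x\<in>V1 \<times> V2. h x = u}. c1 (fst x) * c2 (snd x) * mon (h x) k)"
      using 1 2 by (intro sum.image_gen) simp
    also have "\<dots> = (\<Sum>u\<in>h ` (V1 \<times> V2). c u * mon u k)"
      unfolding c_def sum_distrib_right by (intro sum.cong refl) auto
    finally show "f k * gg k = (\<Sum>u\<in>h ` (V1 \<times> V2). c u * mon u k)" .
  qed
qed

lemma inP_one: "inP l 0 (\<lambda>k. 1)"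
  unfolding inP_def
  by (intro exI[of _ "{replicate l 0}"] exI[of _ "\<lambda>_. 1"]) (simp add: mon_def)

lemma inP_sum:
  assumes "finite I" "\<And>i. i \<in> I \<Longrightarrow> inP l d (F i)"
  shows "inP l d (\<lambda>k. \<Sum>i\<in>I. F i k)"
  using assms by (induction I rule: finite_induct) (auto intro: inP_zero inP_add)

lemma inP_prod:
  assumes "finite I" "\<And>i. i \<in> I \<Longrightarrow> inP l (a i) (F i)"
  shows "inP l (\<Sum>i\<in>I. a i) (\<lambda>k. \<Prod>i\<in>I. F i k)"
  using assms by (induction I rule: finite_induct) (auto intro: inP_one inP_mult)

lemma inP_power:
  assumes "inP l a f"
  shows "inP l (b * a) (\<lambda>k. f k ^ b)"
proof (induction b)
  case 0 then show ?case using inP_one by simp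
next
  case (Suc b)
  then show ?case using inP_mult[OF assms Suc] by (simp add: add.commute)
qed

lemma mon_char:
  assumes "S \<subseteq> {..<length k}"
  shows "mon (map (\<lambda>i. if i \<in> S then 1 else 0) [0..<length k]) k = (\<Prod>s\<in>S. k ! s)"
proof -
  have "mon (map (\<lambda>i. if i \<in> S then 1 else 0) [0..<length k]) k = (\<Prod>j<length k. if j \<in> S then k ! j else 1)"
    unfolding mon_def by (intro prod.cong refl) auto
  also have "\<dots> = (\<Prod>s\<in>{..<length k} \<inter> S. k ! s)" by (simp add: prod.inter_restrict)
  also have "{..<length k} \<inter> S = S" using assms by auto
  finally show ?thesis .
qed

lemma inP_esym: "inP l j (esym j)"
proof -
  let ?S = "{S. S \<subseteq> {..<l} \<and> card S = j}"
  define \<chi> where "\<chi> S = map (\<lambda>i. if i \<in> S then 1 else (0::nat)) [0..<l]" for S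
  have finS: "finite ?S" by (rule finite_subset[of _ "Pow {..<l}"]) auto
  have inj: "inj_on \<chi> ?S"
  proof (rule inj_onI)
    fix S T assume S: "S \<in> ?S" and T: "T \<in> ?S" and e: "\<chi> S = \<chi> T"
    show "S = T"
    proof (intro set_eqI iffI)
      fix x assume "x \<in> S"
      then have "x < l" "\<chi> S ! x = 1" using S by (auto simp: \<chi>_def)
      then show "x \<in> T" using e by (auto simp: \<chi>_def split: if_splits)
    next
      fix x assume "x \<in> T"
      then have "x < l" "\<chi> T ! x = 1" using T by (auto simp: \<chi>_def)
      then show "x \<in> S" using e by (auto simp: \<chi>_def split: if_splits)
    qed
  qed
  have sumchi: "sum_list (\<chi> S) = card S" if "S \<subseteq> {..<l}" for S
  proof -
    have "sum_list (\<chi> S) = (\<Sum>i\<in>{0..<l}. if i \<in> S then 1 else 0)"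
      unfolding \<chi>_def by (simp add: sum_set_upt_conv_sum_list_nat[symmetric])
    also have "\<dots> = card ({0..<l} \<inter> S)" by (simp add: sum.inter_restrict[symmetric])
    also have "{0..<l} \<inter> S = S" using that by auto
    finally show ?thesis .
  qed
  show ?thesis unfolding inP_def
  proof (intro exI[of _ "\<chi> ` ?S"] exI[of _ "\<lambda>_. 1"] conjI allI impI)
    show "finite (\<chi> ` ?S)" using finS by simp
    show "\<forall>v\<in>\<chi> ` ?S. length v = l \<and> sum_list v = j" using sumchi by (auto simp: \<chi>_def)
    fix k :: "complex list" assume k: "length k = l"
    have "(\<Sum>v\<in>\<chi> ` ?S. 1 * mon v k) = (\<Sum>S\<in>?S. mon (\<chi> S) k)"
      using inj by (simp add: sum.reindex)
    also have "\<dots> = esym j k"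
      unfolding esym_def using k by (intro sum.cong refl) (auto simp: \<chi>_def mon_char)
    finally show "esym j k = (\<Sum>v\<in>\<chi> ` ?S. 1 * mon v k)" by simp
  qed
qed

lemma epow_inP:
  assumes "length \<beta> = l"
  shows "inP l (wt \<beta>) (epow \<beta>)"
proof -
  have "inP l (\<Sum>j<l. \<beta> ! j * (j + 1)) (\<lambda>k. \<Prod>j<l. esym (j + 1) k ^ (\<beta> ! j))"
    by (intro inP_prod inP_power inP_esym) simp
  moreover have "(\<Sum>j<l. \<beta> ! j * (j + 1)) = wt \<beta>" unfolding wt_def using assms by (simp add: mult.commute)
  ultimately show ?thesis using assms unfolding epow_def by simp
qed

lemma esym_perm:
  assumes p: "p permutes {..<length k}"
  shows "esym j (permute_list p k) = esym j k"
proof -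
  let ?n = "length k"
  let ?S = "{S. S \<subseteq> {..<?n} \<and> card S = j}"
  have ip: "inv p permutes {..<?n}" using p by (rule permutes_inv)
  have injp: "inj p" using p by (rule permutes_inj)
  have "esym j (permute_list p k) = (\<Sum>S\<in>?S. \<Prod>s\<in>S. k ! p s)"
    unfolding esym_def using p by (intro sum.cong refl prod.cong) (auto simp: permute_list_nth)
  also have "\<dots> = (\<Sum>S\<in>?S. \<Prod>s\<in>p ` S. k ! s)"
    using injp by (intro sum.cong refl) (simp add: prod.reindex inj_on_subset)
  also have "\<dots> = (\<Sum>S\<in>?S. \<Prod>s\<in>S. k ! s)"
  proof (rule sum.reindex_bij_witness[of _ "\<lambda>T. inv p ` T" "\<lambda>S. p ` S"])
    fix S assume S: "S \<in> ?S"
    show "inv p ` p ` S = S" using p by (simp add: image_image permutes_inverses)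
    have "p ` S \<subseteq> {..<?n}" using S by (metis (no_types, lifting) mem_Collect_eq image_mono permutes_image[OF p])
    moreover have "card (p ` S) = j" using S injp by (simp add: card_image inj_on_subset)
    ultimately show "p ` S \<in> ?S" by simp
    show "(\<Prod>s\<in>p ` S. k ! s) = (\<Prod>s\<in>p ` S. k ! s)" ..
  next
    fix T assume T: "T \<in> ?S"
    show "p ` inv p ` T = T" using p by (simp add: image_image permutes_inverses)
    have "inv p ` T \<subseteq> {..<?n}" using T by (metis (no_types, lifting) mem_Collect_eq image_mono permutes_image[OF ip])
    moreover have "card (inv p ` T) = j" using T permutes_inj[OF ip] by (simp add: card_image inj_on_subset)
    ultimately show "inv p ` T \<in> ?S" by simp
  qed
  finally show ?thesis unfolding esym_def .
qed

lemma symf_epow: "symf l (epow \<beta>)"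
  unfolding symf_def epow_def by (auto simp: esym_perm)

lemma symf_cong: "symf l f \<Longrightarrow> (\<And>k. length k = l \<Longrightarrow> f k = gg k) \<Longrightarrow> symf l gg"
  unfolding symf_def by (metis length_permute_list)

lemma symf_add: "symf l f \<Longrightarrow> symf l gg \<Longrightarrow> symf l (\<lambda>k. f k + gg k)"
  unfolding symf_def by simp
lemma symf_smult: "symf l f \<Longrightarrow> symf l (\<lambda>k. a * f k)"
  unfolding symf_def by simp
lemma symf_diff: "symf l f \<Longrightarrow> symf l gg \<Longrightarrow> symf l (\<lambda>k. f k - gg k)"
  unfolding symf_def by simp
lemma symf_mult: "symf l f \<Longrightarrow> symf l gg \<Longrightarrow> symf l (\<lambda>k. f k * gg k)"
  unfolding symf_def by simp
lemma symf_sum: "(\<And>i. i \<in> I \<Longrightarrow> symf l (F i)) \<Longrightarrow> symf l (\<lambda>k. \<Sum>i\<in>I. F i k)"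
  unfolding symf_def by simp
lemma symf_esym: "symf l (esym j)"
  unfolding symf_def by (simp add: esym_perm)

lemma symf_poly:
  assumes fin: "finite V" and len: "\<forall>v\<in>V. length v = l"
    and cl: "\<And>q v. q permutes {..<l} \<Longrightarrow> v \<in> V \<Longrightarrow> permute_list q v \<in> V \<and> c (permute_list q v) = c v"
  shows "symf l (\<lambda>k. \<Sum>v\<in>V. c v * mon v k)"
  unfolding symf_def
proof (intro allI impI)
  fix k :: "complex list" and p assume k: "length k = l" and p: "p permutes {..<l}"
  have "(\<Sum>v\<in>V. c v * mon v (permute_list p k)) = (\<Sum>v\<in>V. c (permute_list p v) * mon v k)"
    using fin len k cl p by (intro sum_mon_perm) auto
  also have "\<dots> = (\<Sum>v\<in>V. c v * mon v k)" using cl p by simp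
  finally show "(\<Sum>v\<in>V. c v * mon v (permute_list p k)) = (\<Sum>v\<in>V. c v * mon v k)" .
qed



lemma inE_cong: "inE l d f \<Longrightarrow> (\<And>k. length k = l \<Longrightarrow> f k = gg k) \<Longrightarrow> inE l d gg"
  unfolding inE_def by metis

lemma inE_add:
  assumes "inE l d f" "inE l d gg"
  shows "inE l d (\<lambda>k. f k + gg k)"
proof -
  obtain V1 c1 where 1: "finite V1" "\<forall>v\<in>V1. length v = l \<and> wt v = d"
    "\<forall>k. length k = l \<longrightarrow> f k = (\<Sum>v\<in>V1. c1 v * epow v k)" using assms(1) unfolding inE_def by blast
  obtain V2 c2 where 2: "finite V2" "\<forall>v\<in>V2. length v = l \<and> wt v = d"
    "\<forall>k. length k = l \<longrightarrow> gg k = (\<Sum>v\<in>V2. c2 v * epow v k)" using assms(2) unfolding inE_def by blast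
  define c where "c v = (if v \<in> V1 then c1 v else 0) + (if v \<in> V2 then c2 v else 0)" for v
  show ?thesis unfolding inE_def
  proof (intro exI[of _ "V1 \<union> V2"] exI[of _ c] conjI allI impI)
    show "finite (V1 \<union> V2)" using 1 2 by simp
    show "\<forall>v\<in>V1 \<union> V2. length v = l \<and> wt v = d" using 1 2 by blast
    fix k :: "complex list" assume k: "length k = l"
    have "(\<Sum>v\<in>V1 \<union> V2. c v * epow v k) = (\<Sum>v\<in>V1 \<union> V2. (if v \<in> V1 then c1 v * epow v k else 0) + (if v \<in> V2 then c2 v * epow v k else 0))"
      unfolding c_def by (intro sum.cong refl) (simp add: distrib_right)
    also have "\<dots> = (\<Sum>v\<in>V1. c1 v * epow v k) + (\<Sum>v\<in>V2. c2 v * epow v k)"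
      unfolding sum.distrib using 1 2 by (simp add: sum_ext_if)
    finally show "f k + gg k = (\<Sum>v\<in>V1 \<union> V2. c v * epow v k)" using 1 2 k by simp
  qed
qed

lemma epow_upd:
  assumes "j < length \<beta>"
  shows "epow (\<beta>[j := \<beta> ! j + 1]) k = esym (j + 1) k * epow \<beta> k"
proof -
  have "epow (\<beta>[j := \<beta> ! j + 1]) k = (\<Prod>i<length \<beta>. (if i = j then esym (j + 1) k else 1) * esym (i + 1) k ^ (\<beta> ! i))"
    unfolding epow_def by (intro prod.cong refl) (auto simp: nth_list_update)
  also have "\<dots> = esym (j + 1) k * epow \<beta> k"
    unfolding prod.distrib epow_def using assms by (simp add: prod.delta)
  finally show ?thesis .
qed

lemma wt_upd:
  assumes "j < length \<beta>"
  shows "wt (\<beta>[j := \<beta> ! j + 1]) = wt \<beta> + (j + 1)"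
proof -
  have "wt (\<beta>[j := \<beta> ! j + 1]) = (\<Sum>i<length \<beta>. (i + 1) * \<beta> ! i + (if i = j then j + 1 else 0))"
    unfolding wt_def by (intro sum.cong refl) (auto simp: nth_list_update)
  also have "\<dots> = wt \<beta> + (j + 1)"
    unfolding sum.distrib wt_def using assms by (simp add: sum.delta)
  finally show ?thesis .
qed

lemma inE_esym_mult:
  assumes "inE l d h" "1 \<le> l"
  shows "inE l (d + l) (\<lambda>k. esym l k * h k)"
proof -
  obtain B c where 1: "finite B" "\<forall>v\<in>B. length v = l \<and> wt v = d"
    "\<forall>k. length k = l \<longrightarrow> h k = (\<Sum>v\<in>B. c v * epow v k)" using assms(1) unfolding inE_def by blast
  define sh where "sh \<beta> = \<beta>[l - 1 := \<beta> ! (l - 1) + 1]" for \<beta> :: "nat list"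
  have inj: "inj_on sh B"
  proof (rule inj_onI)
    fix x y assume x: "x \<in> B" and y: "y \<in> B" and e: "sh x = sh y"
    have lx: "length x = l" and ly: "length y = l" using x y 1 by auto
    show "x = y"
    proof (rule nth_equalityI)
      show "length x = length y" using lx ly by simp
      fix i assume i: "i < length x"
      have "sh x ! i = sh y ! i" using e by simp
      then show "x ! i = y ! i" using i lx ly assms(2) unfolding sh_def
        by (cases "i = l - 1") (auto simp: nth_list_update)
    qed
  qed
  show ?thesis unfolding inE_def
  proof (intro exI[of _ "sh ` B"] exI[of _ "\<lambda>\<beta>. c (the_inv_into B sh \<beta>)"] conjI allI impI)
    show "finite (sh ` B)" using 1 by simp
    show "\<forall>v\<in>sh ` B. length v = l \<and> wt v = d + l"
    proof
      fix v assume "v \<in> sh ` B"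
      then obtain b where b: "b \<in> B" "v = sh b" by blast
      have "wt (sh b) = wt b + (l - 1 + 1)" unfolding sh_def using b 1 assms(2) by (intro wt_upd) auto
      then show "length v = l \<and> wt v = d + l" using b 1 assms(2) by (auto simp: sh_def)
    qed
    fix k :: "complex list" assume k: "length k = l"
    have "(\<Sum>\<beta>\<in>sh ` B. c (the_inv_into B sh \<beta>) * epow \<beta> k) = (\<Sum>\<beta>\<in>B. c \<beta> * epow (sh \<beta>) k)"
      using inj by (simp add: sum.reindex the_inv_into_f_f)
    also have "\<dots> = (\<Sum>\<beta>\<in>B. esym l k * (c \<beta> * epow \<beta> k))"
    proof (intro sum.cong refl)
      fix b assume b: "b \<in> B"
      have "epow (sh b) k = esym (l - 1 + 1) k * epow b k" unfolding sh_def using b 1 assms(2) by (intro epow_upd) auto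
      then show "c b * epow (sh b) k = esym l k * (c b * epow b k)" using assms(2) by simp
    qed
    also have "\<dots> = esym l k * h k" using 1 k by (simp add: sum_distrib_left)
    finally show "esym l k * h k = (\<Sum>\<beta>\<in>sh ` B. c (the_inv_into B sh \<beta>) * epow \<beta> k)" by simp
  qed
qed

lemma epow_snoc0:
  assumes "length \<beta> = Suc l" "length k = l"
  shows "epow \<beta> (k @ [0]) = (if \<beta> ! l = 0 then epow (take l \<beta>) k else 0)"
proof -
  have "epow \<beta> (k @ [0]) = (\<Prod>j<l. esym (j + 1) k ^ (\<beta> ! j)) * esym (Suc l) k ^ (\<beta> ! l)"
    unfolding epow_def using assms by (simp add: esym_snoc0)
  moreover have "esym (Suc l) k = 0" using assms by (simp add: esym_big)
  moreover have "epow (take l \<beta>) k = (\<Prod>j<l. esym (j + 1) k ^ (\<beta> ! j))"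
    unfolding epow_def using assms by simp
  ultimately show ?thesis by simp
qed

lemma wt_snoc0: "wt (\<beta> @ [0]) = wt \<beta>"
  unfolding wt_def by (simp add: nth_append)

lemma permute_list_snoc:
  assumes p: "p permutes {..<length k}"
  shows "permute_list p (k @ [a]) = permute_list p k @ [a]"
proof (rule nth_equalityI)
  show "length (permute_list p (k @ [a])) = length (permute_list p k @ [a])" by simp
  fix i assume i: "i < length (permute_list p (k @ [a]))"
  have p': "p permutes {..<length (k @ [a])}" using p by (rule permutes_subset) auto
  show "permute_list p (k @ [a]) ! i = (permute_list p k @ [a]) ! i"
  proof (cases "i < length k")
    case True
    have "p i < length k" using permutes_in_image[OF p, of i] True by simp
    then show ?thesis using p p' i True by (simp add: permute_list_nth nth_append)
  next
    case False
    then have "i = length k" using i by simp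
    moreover have "p (length k) = length k" using p by (rule permutes_not_in) simp
    ultimately show ?thesis using p' i by (simp add: permute_list_nth nth_append)
  qed
qed

lemma sum_list_pred: "(\<forall>x\<in>set w. 1 \<le> x) \<Longrightarrow> sum_list (map (\<lambda>x. x - 1) w) + length w = (sum_list w :: nat)"
  by (induction w) auto

lemma mon_pred:
  assumes "length w = length k" "\<forall>x\<in>set w. 1 \<le> x"
  shows "mon w k = esym (length k) k * mon (map (\<lambda>x. x - 1) w) k"
proof -
  have "mon w k = (\<Prod>j<length k. k ! j * (k ! j) ^ (w ! j - 1))"
    unfolding mon_def assms(1)
  proof (intro prod.cong refl)
    fix x assume "x \<in> {..<length k}"
    then have "w ! x \<in> set w" using assms by simp
    then have "1 \<le> w ! x" using assms by blast
    then obtain e where "w ! x = Suc e" by (cases "w ! x") auto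
    then show "k ! x ^ w ! x = k ! x * k ! x ^ (w ! x - 1)" by simp
  qed
  also have "\<dots> = esym (length k) k * mon (map (\<lambda>x. x - 1) w) k"
    unfolding prod.distrib esym_full mon_def using assms(1) by simp
  finally show ?thesis .
qed

lemma div_lemma:
  assumes P: "inP (Suc l') d f" and S: "symf (Suc l') f"
    and Z: "\<forall>k. length k = l' \<longrightarrow> f (k @ [0]) = 0"
  shows "(\<forall>k. length k = Suc l' \<longrightarrow> f k = 0) \<or>
    (Suc l' \<le> d \<and> (\<exists>h. inP (Suc l') (d - Suc l') h \<and> symf (Suc l') h \<and>
       (\<forall>k. length k = Suc l' \<longrightarrow> f k = esym (Suc l') k * h k)))"
proof -
  define l where "l = Suc l'"
  obtain V c where V: "finite V" "\<forall>v\<in>V. length v = l \<and> sum_list v = d"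
    "\<forall>k. length k = l \<longrightarrow> f k = (\<Sum>v\<in>V. c v * mon v k)" using P unfolding inP_def l_def by blast
  define W where "W = (\<lambda>(q, v). permute_list q v) ` ({q. q permutes {..<l}} \<times> V)"
  have finW: "finite W" unfolding W_def using V(1) finite_permutations[of "{..<l}"] by simp
  have lenW: "\<forall>w\<in>W. length w = l \<and> sum_list w = d"
    unfolding W_def using V(2) by (auto simp: sum_mset_sum_list[symmetric])
  have VW: "V \<subseteq> W"
  proof
    fix v assume v: "v \<in> V"
    show "v \<in> W" unfolding W_def by (rule image_eqI[of _ _ "(id, v)"]) (auto simp: v)
  qed
  have clW: "permute_list q w \<in> W" if q: "q permutes {..<l}" and w: "w \<in> W" for q w
  proof -
    obtain x where x: "x \<in> {q. q permutes {..<l}} \<times> V" "w = (\<lambda>(q, v). permute_list q v) x"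
      using w unfolding W_def by blast
    obtain q' v where v: "v \<in> V" "q' permutes {..<l}" "w = permute_list q' v" using x by (cases x) auto
    have "permute_list q w = permute_list (q' \<circ> q) v" using v q V(2) by (simp add: permute_list_compose)
    moreover have "q' \<circ> q permutes {..<l}" using permutes_compose[OF q v(2)] .
    ultimately show ?thesis unfolding W_def using v(1) by force
  qed
  define c0 where "c0 w = (if w \<in> V then c w else 0)" for w
  have fW: "f k = (\<Sum>w\<in>W. c0 w * mon w k)" if k: "length k = l" for k
  proof -
    have "(\<Sum>w\<in>W. c0 w * mon w k) = (\<Sum>w\<in>W. if w \<in> V then c w * mon w k else 0)"
      unfolding c0_def by (intro sum.cong refl) simp
    also have "\<dots> = (\<Sum>w\<in>V. c w * mon w k)" using finW VW by (rule sum_ext_if)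
    finally show ?thesis using V(3) k by simp
  qed
  have inv: "c0 (permute_list q w) = c0 w" if q: "q permutes {..<l}" and w: "w \<in> W" for q w
  proof -
    have "\<forall>k. length k = l \<longrightarrow> (\<Sum>w\<in>W. (c0 w - c0 (permute_list q w)) * mon w k) = 0"
    proof (intro allI impI)
      fix k :: "complex list" assume k: "length k = l"
      have "(\<Sum>w\<in>W. (c0 w - c0 (permute_list q w)) * mon w k) =
            (\<Sum>w\<in>W. c0 w * mon w k) - (\<Sum>w\<in>W. c0 (permute_list q w) * mon w k)"
        by (simp add: sum_subtractf left_diff_distrib)
      also have "(\<Sum>w\<in>W. c0 (permute_list q w) * mon w k) = (\<Sum>w\<in>W. c0 w * mon w (permute_list q k))"
        using sum_mon_perm[OF finW _ k clW q, of c0] lenW by simp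
      also have "\<dots> = f (permute_list q k)" using fW[of "permute_list q k"] k by simp
      also have "\<dots> = f k" using S q k unfolding symf_def l_def by simp
      finally show "(\<Sum>w\<in>W. (c0 w - c0 (permute_list q w)) * mon w k) = 0" using fW[OF k] by simp
    qed
    then have "c0 w - c0 (permute_list q w) = 0"
      using mon_indep[of W l "\<lambda>w. c0 w - c0 (permute_list q w)" w] finW w lenW by blast
    then show ?thesis by simp
  qed
  have zlast: "c0 w = 0" if w: "w \<in> W" "w ! l' = 0" for w
  proof -
    let ?U = "take l' ` {w\<in>W. w ! l' = 0}"
    have "\<forall>k. length k = l' \<longrightarrow> (\<Sum>u\<in>?U. c0 (u @ [0]) * mon u k) = 0"
    proof (intro allI impI)
      fix k :: "complex list" assume k: "length k = l'"
      have "(\<Sum>u\<in>?U. c0 (u @ [0]) * mon u k) = (\<Sum>w\<in>W. c0 w * mon w (k @ [0]))"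
        using restrict_sum[OF finW _ k, of c0] lenW unfolding l_def by simp
      also have "\<dots> = f (k @ [0])" using fW[of "k @ [0]"] k l_def by simp
      finally show "(\<Sum>u\<in>?U. c0 (u @ [0]) * mon u k) = 0" using Z k by simp
    qed
    moreover have "take l' w \<in> ?U" using w by blast
    moreover have "finite ?U" using finW by simp
    moreover have "\<forall>u\<in>?U. length u = l'" using lenW l_def by auto
    ultimately have "c0 (take l' w @ [0]) = 0"
      using mon_indep[of ?U l' "\<lambda>u. c0 (u @ [0])" "take l' w"] by blast
    moreover have "take l' w @ [0] = w" using w lenW take_Suc_conv_app_nth[of l' w] l_def by auto
    ultimately show ?thesis by simp
  qed
  have zany: "c0 w = 0" if w: "w \<in> W" "0 \<in> set w" for w
  proof -
    obtain j where j: "j < length w" "w ! j = 0" using w(2) by (auto simp: in_set_conv_nth)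
    have lw: "length w = l" using lenW w by simp
    define q where "q = transpose j l'"
    have q: "q permutes {..<l}" unfolding q_def using j lw l_def by (intro permutes_swap_id) auto
    have "permute_list q w ! l' = w ! j"
      using q lw l_def by (simp add: permute_list_nth q_def)
    then have "c0 (permute_list q w) = 0" using zlast clW[OF q w(1)] j by simp
    then show ?thesis using inv[OF q w(1)] by simp
  qed
  define Wp where "Wp = {w\<in>W. \<forall>x\<in>set w. 1 \<le> x}"
  have finWp: "finite Wp" unfolding Wp_def using finW by simp
  have fWp: "f k = (\<Sum>w\<in>Wp. c0 w * mon w k)" if k: "length k = l" for k
  proof -
    have "(\<Sum>w\<in>Wp. c0 w * mon w k) = (\<Sum>w\<in>W. c0 w * mon w k)"
    proof (rule sum.mono_neutral_left[OF finW])
      show "Wp \<subseteq> W" unfolding Wp_def by blast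
      show "\<forall>i\<in>W - Wp. c0 i * mon i k = 0"
      proof
        fix w assume "w \<in> W - Wp"
        then have w: "w \<in> W" "\<not> (\<forall>x\<in>set w. 1 \<le> x)" unfolding Wp_def by auto
        then obtain x where "x \<in> set w" "\<not> 1 \<le> x" by blast
        then have "0 \<in> set w" by (metis less_one not_le)
        with w have "w \<in> W" "0 \<in> set w" by auto
        then show "c0 w * mon w k = 0" using zany by simp
      qed
    qed
    then show ?thesis using fW[OF k] by simp
  qed
  show ?thesis
  proof (cases "Wp = {}")
    case True
    then show ?thesis using fWp l_def by simp
  next
    case False
    then obtain w0 where w0: "w0 \<in> Wp" by blast
    have "sum_list w0 = d" "length w0 = l" using w0 lenW unfolding Wp_def by auto
    then have ld: "l \<le> d" using sum_list_pred[of w0] w0 unfolding Wp_def by auto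
    define pr where "pr w = map (\<lambda>x. x - 1) w" for w :: "nat list"
    define U where "U = pr ` Wp"
    have prS: "map Suc (pr w) = w" if "w \<in> Wp" for w
      unfolding pr_def map_map by (rule map_idI) (use that in \<open>auto simp: Wp_def\<close>)
    have injpr: "inj_on pr Wp" by (rule inj_onI) (metis prS)
    define h where "h k = (\<Sum>u\<in>U. c0 (map Suc u) * mon u k)" for k
    have lenU: "\<forall>u\<in>U. length u = l \<and> sum_list u = d - l"
    proof
      fix u assume "u \<in> U"
      then obtain w where w: "w \<in> Wp" "u = pr w" unfolding U_def by blast
      then have "length w = l" "sum_list w = d" "\<forall>x\<in>set w. 1 \<le> x" using lenW unfolding Wp_def by auto
      then show "length u = l \<and> sum_list u = d - l"
        using sum_list_pred[of w] w unfolding pr_def by auto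
    qed
    have hP: "inP l (d - l) h" unfolding inP_def h_def
      by (intro exI[of _ U] exI[of _ "\<lambda>u. c0 (map Suc u)"]) (use lenU finWp U_def in auto)
    have clU: "permute_list q u \<in> U \<and> c0 (map Suc (permute_list q u)) = c0 (map Suc u)"
      if q: "q permutes {..<l}" and u: "u \<in> U" for q u
    proof -
      obtain w where w: "w \<in> Wp" "u = pr w" using u unfolding U_def by blast
      have lw: "length w = l" using w lenW unfolding Wp_def by auto
      have e: "permute_list q u = pr (permute_list q w)"
        using w q lw unfolding pr_def by (simp add: permute_list_map)
      have "permute_list q w \<in> W" using clW[OF q] w unfolding Wp_def by blast
      moreover have "set (permute_list q w) = set w"
        using q lw by (metis mset_permute_list set_mset_mset)
      ultimately have pw: "permute_list q w \<in> Wp" using w unfolding Wp_def by auto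
      have "c0 (map Suc (permute_list q u)) = c0 (permute_list q w)" using e prS[OF pw] by simp
      also have "\<dots> = c0 w" using inv[OF q] w unfolding Wp_def by blast
      also have "\<dots> = c0 (map Suc u)" using prS[OF w(1)] w by simp
      finally show ?thesis using e pw unfolding U_def by blast
    qed
    have hS: "symf l h" unfolding h_def
    proof (rule symf_poly)
      show "finite U" using finWp U_def by simp
      show "\<forall>v\<in>U. length v = l" using lenU by simp
      show "\<And>q v. q permutes {..<l} \<Longrightarrow> v \<in> U \<Longrightarrow> permute_list q v \<in> U \<and> c0 (map Suc (permute_list q v)) = c0 (map Suc v)"
        using clU by blast
    qed
    have fh: "f k = esym l k * h k" if k: "length k = l" for k
    proof -
      have "f k = (\<Sum>w\<in>Wp. c0 w * mon w k)" using fWp[OF k] .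
      also have "\<dots> = (\<Sum>w\<in>Wp. esym l k * (c0 (map Suc (pr w)) * mon (pr w) k))"
      proof (intro sum.cong refl)
        fix w assume w: "w \<in> Wp"
        then have "length w = length k" "\<forall>x\<in>set w. 1 \<le> x" using lenW k unfolding Wp_def by auto
        then show "c0 w * mon w k = esym l k * (c0 (map Suc (pr w)) * mon (pr w) k)"
          using mon_pred[of w k] prS[OF w] k unfolding pr_def by simp
      qed
      also have "\<dots> = esym l k * (\<Sum>w\<in>Wp. c0 (map Suc (pr w)) * mon (pr w) k)"
        by (simp add: sum_distrib_left)
      also have "(\<Sum>w\<in>Wp. c0 (map Suc (pr w)) * mon (pr w) k) = h k"
        unfolding h_def U_def using injpr by (simp add: sum.reindex)
      finally show ?thesis .
    qed
    show ?thesis using ld hP hS fh unfolding l_def by blast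
  qed
qed



lemma sym_inE: "inP l d f \<Longrightarrow> symf l f \<Longrightarrow> inE l d f"
proof (induction l arbitrary: d f)
  case 0
  obtain V c where V: "finite V" "\<forall>v\<in>V. length v = 0 \<and> sum_list v = d"
    "\<forall>k. length k = 0 \<longrightarrow> f k = (\<Sum>v\<in>V. c v * mon v k)" using "0.prems"(1) unfolding inP_def by blast
  show ?case
  proof (cases "d = 0")
    case True
    show ?thesis unfolding inE_def
      by (intro exI[of _ "{[]}"] exI[of _ "\<lambda>_. f []"]) (auto simp: True wt_def epow_def)
  next
    case False
    then have "V = {}" using V(2) by auto
    then have "\<forall>k. length k = 0 \<longrightarrow> f k = 0" using V(3) by simp
    then show ?thesis unfolding inE_def by (intro exI[of _ "{}"]) auto
  qed
next
  case (Suc l')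
  have main: "\<forall>f. inP (Suc l') d f \<longrightarrow> symf (Suc l') f \<longrightarrow> inE (Suc l') d f" for d
  proof (induction d rule: less_induct)
    case (less d)
    show ?case
    proof (intro allI impI)
      fix f assume P: "inP (Suc l') d f" and S: "symf (Suc l') f"
      define f' where "f' k = f (k @ [0])" for k
      have P': "inP l' d f'"
      proof -
        obtain V c where V: "finite V" "\<forall>v\<in>V. length v = Suc l' \<and> sum_list v = d"
          "\<forall>k. length k = Suc l' \<longrightarrow> f k = (\<Sum>v\<in>V. c v * mon v k)" using P unfolding inP_def by blast
        show ?thesis unfolding inP_def
        proof (intro exI[of _ "take l' ` {v\<in>V. v ! l' = 0}"] exI[of _ "\<lambda>u. c (u @ [0])"] conjI allI impI)
          show "finite (take l' ` {v \<in> V. v ! l' = 0})" using V(1) by simp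
          show "\<forall>v\<in>take l' ` {v \<in> V. v ! l' = 0}. length v = l' \<and> sum_list v = d"
          proof
            fix u assume "u \<in> take l' ` {v \<in> V. v ! l' = 0}"
            then obtain v where v: "v \<in> V" "v ! l' = 0" "u = take l' v" by blast
            have "v = take l' v @ [v ! l']" using v V(2) take_Suc_conv_app_nth[of l' v] by simp
            then have "sum_list v = sum_list (take l' v)" using v by (metis add_0_right sum_list_append sum_list_simps)
            then show "length u = l' \<and> sum_list u = d" using v V(2) by auto
          qed
          fix k :: "complex list" assume k: "length k = l'"
          show "f' k = (\<Sum>u\<in>take l' ` {v \<in> V. v ! l' = 0}. c (u @ [0]) * mon u k)"
            unfolding f'_def using V k restrict_sum[OF V(1) _ k, of c] by simp
        qed
      qed
      have S': "symf l' f'" unfolding symf_def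
      proof (intro allI impI)
        fix k :: "complex list" and p assume k: "length k = l'" and p: "p permutes {..<l'}"
        have p': "p permutes {..<Suc l'}" using p by (rule permutes_subset) auto
        have "f' (permute_list p k) = f (permute_list p (k @ [0]))"
          unfolding f'_def using p k by (simp add: permute_list_snoc)
        also have "\<dots> = f (k @ [0])" using S p' k unfolding symf_def by simp
        finally show "f' (permute_list p k) = f' k" unfolding f'_def .
      qed
      obtain B' c' where B': "finite B'" "\<forall>\<beta>\<in>B'. length \<beta> = l' \<and> wt \<beta> = d"
        "\<forall>k. length k = l' \<longrightarrow> f' k = (\<Sum>\<beta>\<in>B'. c' \<beta> * epow \<beta> k)"
        using Suc.IH[OF P' S'] unfolding inE_def by blast
      define Q where "Q k = (\<Sum>\<beta>\<in>B'. c' \<beta> * epow (\<beta> @ [0]) k)" for k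
      have QP: "inP (Suc l') d Q" unfolding Q_def
      proof (intro inP_sum inP_smult B'(1))
        fix \<beta> assume "\<beta> \<in> B'"
        then have "length (\<beta> @ [0]) = Suc l'" "wt (\<beta> @ [0]) = d" using B'(2) by (auto simp: wt_snoc0)
        then show "inP (Suc l') d (epow (\<beta> @ [0]))" using epow_inP by metis
      qed
      have QS: "symf (Suc l') Q" unfolding Q_def
        by (intro symf_sum symf_smult symf_epow)
      have QE: "inE (Suc l') d Q" unfolding inE_def
      proof (intro exI[of _ "(\<lambda>\<beta>. \<beta> @ [0]) ` B'"] exI[of _ "\<lambda>\<beta>. c' (butlast \<beta>)"] conjI allI impI)
        show "finite ((\<lambda>\<beta>. \<beta> @ [0]) ` B')" using B'(1) by simp
        show "\<forall>\<beta>\<in>(\<lambda>\<beta>. \<beta> @ [0]) ` B'. length \<beta> = Suc l' \<and> wt \<beta> = d" using B'(2) by (auto simp: wt_snoc0)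
        fix k :: "complex list" assume "length k = Suc l'"
        have "inj_on (\<lambda>\<beta>. \<beta> @ [0 :: nat]) B'" by (rule inj_onI) simp
        then show "Q k = (\<Sum>\<beta>\<in>(\<lambda>\<beta>. \<beta> @ [0]) ` B'. c' (butlast \<beta>) * epow \<beta> k)"
          unfolding Q_def by (simp add: sum.reindex)
      qed
      have Q0: "Q (k @ [0]) = f (k @ [0])" if k: "length k = l'" for k
      proof -
        have "Q (k @ [0]) = (\<Sum>\<beta>\<in>B'. c' \<beta> * epow \<beta> k)"
          unfolding Q_def
        proof (intro sum.cong refl)
          fix \<beta> assume "\<beta> \<in> B'"
          then have "length \<beta> = l'" using B'(2) by simp
          then show "c' \<beta> * epow (\<beta> @ [0]) (k @ [0]) = c' \<beta> * epow \<beta> k" using k by (simp add: epow_snoc0 nth_append)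
        qed
        then show ?thesis using B'(3) k f'_def by simp
      qed
      define R where "R k = f k - Q k" for k
      have RP: "inP (Suc l') d R" unfolding R_def by (rule inP_diff[OF P QP])
      have RS: "symf (Suc l') R" unfolding R_def by (rule symf_diff[OF S QS])
      have RZ: "\<forall>k. length k = l' \<longrightarrow> R (k @ [0]) = 0" unfolding R_def using Q0 by simp
      from div_lemma[OF RP RS RZ]
      show "inE (Suc l') d f"
      proof
        assume "\<forall>k. length k = Suc l' \<longrightarrow> R k = 0"
        then show ?thesis using QE unfolding R_def by (elim inE_cong) simp
      next
        assume "Suc l' \<le> d \<and> (\<exists>h. inP (Suc l') (d - Suc l') h \<and> symf (Suc l') h \<and>
           (\<forall>k. length k = Suc l' \<longrightarrow> R k = esym (Suc l') k * h k))"
        then obtain h where ld: "Suc l' \<le> d" and h: "inP (Suc l') (d - Suc l') h" "symf (Suc l') h"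
           "\<forall>k. length k = Suc l' \<longrightarrow> R k = esym (Suc l') k * h k" by blast
        have "d - Suc l' < d" using ld by simp
        then have "inE (Suc l') (d - Suc l') h" using less.IH h(1,2) by blast
        then have "inE (Suc l') (d - Suc l' + Suc l') (\<lambda>k. esym (Suc l') k * h k)"
          by (rule inE_esym_mult) simp
        then have "inE (Suc l') d (\<lambda>k. esym (Suc l') k * h k)" using ld by simp
        then have "inE (Suc l') d (\<lambda>k. Q k + esym (Suc l') k * h k)" using QE by (intro inE_add)
        then show ?thesis
        proof (rule inE_cong)
          fix k :: "complex list" assume "length k = Suc l'"
          then have "f k - Q k = esym (Suc l') k * h k" using h(3) unfolding R_def by blast
          then show "Q k + esym (Suc l') k * h k = f k" by (simp add: algebra_simps)
        qed
      qed
    qed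
  qed
  then show ?case using Suc.prems by blast
qed

lemma vieta:
  "coeff (\<Prod>a\<leftarrow>k. [:a, 1:]) r = (if r \<le> length k then esym (length k - r) k else 0)"
proof (induction k arbitrary: r rule: rev_induct)
  case Nil
  then show ?case by (cases r) auto
next
  case (snoc a k)
  let ?q = "(\<Prod>a\<leftarrow>k. [:a, 1:])"
  let ?n = "length k"
  have e: "(\<Prod>a\<leftarrow>k @ [a]. [:a, 1:]) = smult a ?q + pCons 0 ?q" by simp
  show ?case
  proof (cases r)
    case 0
    have "coeff (\<Prod>a\<leftarrow>k @ [a]. [:a, 1:]) r = a * esym ?n k" using snoc[of 0] 0 by (simp add: e)
    moreover have "esym (Suc ?n) (k @ [a]) = a * esym ?n k" by (simp add: esym_snoc esym_big)
    ultimately show ?thesis using 0 by simp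
  next
    case (Suc r')
    have c: "coeff (\<Prod>a\<leftarrow>k @ [a]. [:a, 1:]) r = a * coeff ?q (Suc r') + coeff ?q r'"
      using Suc by (simp add: e)
    show ?thesis
    proof (cases "Suc r' \<le> ?n")
      case True
      then have "?n - r' = Suc (?n - Suc r')" by simp
      then have "esym (?n - r') (k @ [a]) = esym (?n - r') k + a * esym (?n - Suc r') k"
        by (simp add: esym_snoc)
      then show ?thesis using c True Suc snoc by simp
    next
      case False
      show ?thesis
      proof (cases "r' = ?n")
        case True
        then show ?thesis using c Suc snoc by simp
      next
        case False
        then show ?thesis using c Suc snoc \<open>\<not> Suc r' \<le> ?n\<close> by simp
      qed
    qed
  qed
qed

lemma esym_surj:
  assumes ly: "length y = l"
  shows "\<exists>k. length k = l \<and> (\<forall>j<l. esym (j + 1) k = y ! j)"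
proof -
  define p :: "complex poly" where "p = monom 1 l + (\<Sum>j<l. monom (y ! j) (l - Suc j))"
  have cp: "coeff p r = (if r = l then 1 else 0) + (\<Sum>j<l. if l - Suc j = r then y ! j else 0)" for r
    unfolding p_def by (simp add: coeff_sum coeff_monom)
  have cpj: "coeff p (l - Suc j) = y ! j" if j: "j < l" for j
  proof -
    have "(\<Sum>i<l. if l - Suc i = l - Suc j then y ! i else 0) = (\<Sum>i<l. if i = j then y ! i else 0)"
      using j by (intro sum.cong refl) auto
    also have "\<dots> = y ! j" using j by simp
    finally show ?thesis using cp[of "l - Suc j"] j by simp
  qed
  have "(\<Sum>j<l. if l - Suc j = l then y ! j else 0) = 0" by (intro sum.neutral) auto
  then have cpl: "coeff p l = 1" using cp[of l] by simp
  have cpbig: "coeff p r = 0" if "l < r" for r using cp[of r] that by (intro trans[OF _ sum.neutral]) auto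
  have dp: "degree p = l"
  proof (rule antisym)
    show "degree p \<le> l" by (rule degree_le) (use cpbig in auto)
    show "l \<le> degree p" by (rule le_degree) (simp add: cpl)
  qed
  have p0: "p \<noteq> 0" using cpl by auto
  obtain A where A: "size A = degree p" "p = smult (lead_coeff p) (\<Prod>x\<in>#A. [:-x, 1:])"
    using alg_closed_imp_factorization[OF p0] by blast
  obtain xs where xs: "mset xs = A" using ex_mset by blast
  define k where "k = map uminus xs"
  have "(\<Prod>x\<in>#A. [:-x, 1:]) = (\<Prod>a\<leftarrow>k. [:a, 1:])"
    unfolding k_def xs[symmetric] by (simp add: prod_mset_prod_list[symmetric] o_def)
  then have pk: "p = (\<Prod>a\<leftarrow>k. [:a, 1:])" using A(2) dp cpl by simp
  have lk: "length k = l" unfolding k_def using A(1) dp xs by (metis length_map size_mset)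
  show ?thesis
  proof (intro exI[of _ k] conjI allI impI lk)
    fix j assume j: "j < l"
    have "coeff p (l - Suc j) = esym (l - (l - Suc j)) k" using vieta[of k "l - Suc j"] pk lk by simp
    then show "esym (j + 1) k = y ! j" using cpj[OF j] j by simp
  qed
qed

lemma epow_indep:
  assumes fin: "finite B" and len: "\<forall>\<beta>\<in>B. length \<beta> = l"
    and z: "\<forall>k. length k = l \<longrightarrow> (\<Sum>\<beta>\<in>B. c \<beta> * epow \<beta> k) = 0" and b: "\<beta> \<in> B"
  shows "c \<beta> = 0"
proof -
  have "\<forall>y. length y = l \<longrightarrow> (\<Sum>\<beta>\<in>B. c \<beta> * mon \<beta> y) = 0"
  proof (intro allI impI)
    fix y :: "complex list" assume y: "length y = l"
    obtain k where k: "length k = l" "\<forall>j<l. esym (j + 1) k = y ! j" using esym_surj[OF y] by blast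
    have "(\<Sum>\<beta>\<in>B. c \<beta> * mon \<beta> y) = (\<Sum>\<beta>\<in>B. c \<beta> * epow \<beta> k)"
      using len k unfolding mon_def epow_def by (intro sum.cong refl) auto
    then show "(\<Sum>\<beta>\<in>B. c \<beta> * mon \<beta> y) = 0" using z k by simp
  qed
  then show ?thesis using mon_indep[of B l c \<beta>] fin len b by blast
qed



lemma Bset_wt: "Bset l n = {\<beta>. length \<beta> = l \<and> 1 \<le> l \<and> 1 \<le> \<beta> ! (l - 1) \<and> wt \<beta> = n}"
  unfolding Bset_def wt_def by auto

lemma Bset_finite: "finite (Bset l n)"
proof (rule finite_subset[of _ "{xs. set xs \<subseteq> {..n} \<and> length xs = l}"])
  show "Bset l n \<subseteq> {xs. set xs \<subseteq> {..n} \<and> length xs = l}"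
  proof
    fix \<beta> assume b: "\<beta> \<in> Bset l n"
    have "x \<le> n" if "x \<in> set \<beta>" for x
    proof -
      obtain j where j: "j < length \<beta>" "x = \<beta> ! j" using \<open>x \<in> set \<beta>\<close> by (auto simp: in_set_conv_nth)
      have "(j + 1) * \<beta> ! j \<le> (\<Sum>j<l. (j + 1) * \<beta> ! j)"
        using j b unfolding Bset_def by (intro member_le_sum) auto
      then show "x \<le> n" using j b unfolding Bset_def by (simp add: order_trans[OF _ \<open>_ \<le> _\<close>])
    qed
    then show "\<beta> \<in> {xs. set xs \<subseteq> {..n} \<and> length xs = l}" using b unfolding Bset_def by auto
  qed
  show "finite {xs. set xs \<subseteq> {..n} \<and> length xs = l}" by (rule finite_lists_length_eq) simp
qed

lemma comps_finite: "finite (comps l n)"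
proof (rule finite_subset[of _ "{xs. set xs \<subseteq> {..n} \<and> length xs = l}"])
  show "comps l n \<subseteq> {xs. set xs \<subseteq> {..n} \<and> length xs = l}"
    unfolding comps_def by (auto dest: member_le_sum_list)
  show "finite {xs. set xs \<subseteq> {..n} \<and> length xs = l}" by (rule finite_lists_length_eq) simp
qed

lemma restrict_sum_epow:
  assumes fin: "finite V" and len: "\<forall>v\<in>V. length v = Suc l" and lk: "length k = l"
  shows "(\<Sum>v\<in>V. c v * epow v (k @ [0])) = (\<Sum>u\<in>take l ` {v\<in>V. v ! l = 0}. c (u @ [0]) * epow u k)"
proof -
  have eq: "v = take l v @ [0]" if "v \<in> V" "v ! l = 0" for v
    using that len take_Suc_conv_app_nth[of l v] by simp
  have inj: "inj_on (take l) {v\<in>V. v ! l = 0}"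
    by (rule inj_onI) (metis (mono_tags, lifting) eq mem_Collect_eq)
  have "(\<Sum>v\<in>V. c v * epow v (k @ [0])) = (\<Sum>v\<in>V. if v ! l = 0 then c v * epow (take l v) k else 0)"
    using len lk by (intro sum.cong refl) (simp add: epow_snoc0)
  also have "\<dots> = (\<Sum>v\<in>{v\<in>V. v ! l = 0}. c v * epow (take l v) k)"
    using fin by (simp add: sum.inter_filter)
  also have "\<dots> = (\<Sum>v\<in>{v\<in>V. v ! l = 0}. c (take l v @ [0]) * epow (take l v) k)"
    using eq by (intro sum.cong refl) auto
  also have "\<dots> = (\<Sum>u\<in>take l ` {v\<in>V. v ! l = 0}. c (u @ [0]) * epow u k)"
    using inj by (simp add: sum.reindex)
  finally show ?thesis .
qed

definition Arr :: "nat \<Rightarrow> nat multiset \<Rightarrow> nat list set" where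
  "Arr l m = {c. length c = l \<and> mset c = m}"

lemma Arr_finite: "finite (Arr l m)"
  by (rule finite_subset[of _ "{xs. set xs \<subseteq> set_mset m \<and> length xs = l}"])
     (auto simp: Arr_def intro: finite_lists_length_eq)

lemma lhs_coeff_M:
  assumes "length k = l"
  shows "lhs_coeff l n k m = (if (\<forall>x\<in>#m. 1 \<le> x) \<and> sum_mset m = n then (\<Sum>c\<in>Arr l m. mon c k) else 0)"
proof (cases "(\<forall>x\<in>#m. 1 \<le> x) \<and> sum_mset m = n")
  case True
  have eqA: "{c \<in> comps l n. mset c = m} = Arr l m"
    using True unfolding comps_def Arr_def by (auto simp: sum_mset_sum_list[symmetric])
  show ?thesis using True unfolding lhs_coeff_def eqA
    by (simp add: mon_def Arr_def)
next
  case False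
  have eqA: "{c \<in> comps l n. mset c = m} = {}"
    using False unfolding comps_def by (auto simp: sum_mset_sum_list[symmetric])
  show ?thesis unfolding lhs_coeff_def eqA by (simp only: if_not_P[OF False] sum.empty)
qed

lemma exist_rep:
  assumes l: "1 \<le> l"
  shows "\<exists>C. \<forall>k. length k = l \<longrightarrow> lhs_coeff l n k m = (\<Sum>\<beta>\<in>Bset l n. C \<beta> * epow \<beta> k)"
proof (cases "(\<forall>x\<in>#m. 1 \<le> x) \<and> sum_mset m = n")
  case False
  show ?thesis
  proof (intro exI[of _ "\<lambda>_. 0"] allI impI)
    fix k :: "complex list" assume k: "length k = l"
    have "lhs_coeff l n k m = 0" by (subst lhs_coeff_M[OF k]) (simp only: if_not_P[OF False])
    then show "lhs_coeff l n k m = (\<Sum>\<beta>\<in>Bset l n. 0 * epow \<beta> k)" by simp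
  qed
next
  case True
  define M where "M k = (\<Sum>c\<in>Arr l m. mon c k)" for k
  have lenA: "\<forall>v\<in>Arr l m. length v = l \<and> sum_list v = n"
  proof
    fix v assume "v \<in> Arr l m"
    then have "length v = l" "mset v = m" by (auto simp: Arr_def)
    then show "length v = l \<and> sum_list v = n" using True by (metis sum_mset_sum_list)
  qed
  have MP: "inP l n M" unfolding inP_def M_def
    by (intro exI[of _ "Arr l m"] exI[of _ "\<lambda>_. 1"] conjI Arr_finite lenA) simp
  have MS: "symf l M" unfolding M_def
  proof -
    have "symf l (\<lambda>k. \<Sum>v\<in>Arr l m. 1 * mon v k)"
    proof (rule symf_poly[OF Arr_finite])
      show "\<forall>v\<in>Arr l m. length v = l" using lenA by blast
      fix q v assume q: "q permutes {..<l}" and v: "v \<in> Arr l m"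
      then have "length v = l" "mset v = m" by (auto simp: Arr_def)
      then show "permute_list q v \<in> Arr l m \<and> 1 = 1" using q by (simp add: Arr_def)
    qed
    then show "symf l (\<lambda>k. \<Sum>c\<in>Arr l m. mon c k)" by simp
  qed
  obtain B c where B: "finite B" "\<forall>\<beta>\<in>B. length \<beta> = l \<and> wt \<beta> = n"
    "\<forall>k. length k = l \<longrightarrow> M k = (\<Sum>\<beta>\<in>B. c \<beta> * epow \<beta> k)"
    using sym_inE[OF MP MS] unfolding inE_def by blast
  obtain l' where l': "l = Suc l'" using l by (cases l) auto
  have M0: "M (k @ [0]) = 0" if k: "length k = l'" for k
  proof -
    have "mon a (k @ [0]) = 0" if a: "a \<in> Arr l m" for a
    proof -
      have "length a = Suc l'" using a l' by (simp add: Arr_def)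
      moreover have "a ! l' \<in> set a" using a l' by (simp add: Arr_def)
      then have "a ! l' \<in># m" using a by (auto simp: Arr_def)
      then have "a ! l' \<noteq> 0" using True by fastforce
      ultimately show ?thesis using k by (simp add: mon_snoc0)
    qed
    then show ?thesis unfolding M_def by simp
  qed
  have cz: "c \<beta> = 0" if b: "\<beta> \<in> B" "\<beta> ! l' = 0" for \<beta>
  proof -
    let ?U = "take l' ` {v\<in>B. v ! l' = 0}"
    have "\<forall>k. length k = l' \<longrightarrow> (\<Sum>u\<in>?U. c (u @ [0]) * epow u k) = 0"
    proof (intro allI impI)
      fix k :: "complex list" assume k: "length k = l'"
      have "(\<Sum>u\<in>?U. c (u @ [0]) * epow u k) = (\<Sum>v\<in>B. c v * epow v (k @ [0]))"
        using restrict_sum_epow[OF B(1) _ k, of c] B(2) l' by simp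
      also have "\<dots> = M (k @ [0])" using B(3) k l' by simp
      finally show "(\<Sum>u\<in>?U. c (u @ [0]) * epow u k) = 0" using M0[OF k] by simp
    qed
    moreover have "take l' \<beta> \<in> ?U" using b by blast
    moreover have "finite ?U" using B(1) by simp
    moreover have "\<forall>u\<in>?U. length u = l'" using B(2) l' by auto
    ultimately have "c (take l' \<beta> @ [0]) = 0"
      using epow_indep[of ?U l' "\<lambda>u. c (u @ [0])" "take l' \<beta>"] by blast
    moreover have "take l' \<beta> @ [0] = \<beta>" using b B(2) take_Suc_conv_app_nth[of l' \<beta>] l' by auto
    ultimately show ?thesis by simp
  qed
  show ?thesis
  proof (intro exI[of _ "\<lambda>\<beta>. if \<beta> \<in> B then c \<beta> else 0"] allI impI)
    fix k :: "complex list" assume k: "length k = l"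
    have "(\<Sum>\<beta>\<in>Bset l n. (if \<beta> \<in> B then c \<beta> else 0) * epow \<beta> k) = (\<Sum>\<beta>\<in>Bset l n \<inter> B. c \<beta> * epow \<beta> k)"
    proof -
      have "(\<Sum>\<beta>\<in>Bset l n. (if \<beta> \<in> B then c \<beta> else 0) * epow \<beta> k) = (\<Sum>\<beta>\<in>Bset l n. if \<beta> \<in> B then c \<beta> * epow \<beta> k else 0)"
        by (intro sum.cong refl) simp
      also have "\<dots> = (\<Sum>\<beta>\<in>Bset l n \<inter> B. c \<beta> * epow \<beta> k)"
        using Bset_finite by (simp add: sum.inter_restrict)
      finally show ?thesis .
    qed
    also have "\<dots> = (\<Sum>\<beta>\<in>B. c \<beta> * epow \<beta> k)"
    proof (rule sum.mono_neutral_left[OF B(1)])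
      show "Bset l n \<inter> B \<subseteq> B" by blast
      show "\<forall>i\<in>B - Bset l n \<inter> B. c i * epow i k = 0"
      proof
        fix \<beta> assume "\<beta> \<in> B - Bset l n \<inter> B"
        then have "\<beta> \<in> B" "\<beta> \<notin> Bset l n" by auto
        then have "\<beta> ! l' = 0" using B(2) l' unfolding Bset_wt by auto
        then show "c \<beta> * epow \<beta> k = 0" using cz \<open>\<beta> \<in> B\<close> by simp
      qed
    qed
    also have "\<dots> = lhs_coeff l n k m" using B(3) k True unfolding M_def by (simp add: lhs_coeff_M)
    finally show "lhs_coeff l n k m = (\<Sum>\<beta>\<in>Bset l n. (if \<beta> \<in> B then c \<beta> else 0) * epow \<beta> k)" by simp
  qed
qed

lemma Bset_len: "\<forall>\<beta>\<in>Bset l n. length \<beta> = l"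
  by (simp add: Bset_def)

lemma gfam_ex1:
  assumes l: "1 \<le> l"
  shows "\<exists>!G. gfam_ok l n G"
proof (rule ex_ex1I)
  have "\<forall>m. \<exists>C. \<forall>k. length k = l \<longrightarrow> lhs_coeff l n k m = (\<Sum>\<beta>\<in>Bset l n. C \<beta> * epow \<beta> k)"
    using exist_rep[OF l] by blast
  then obtain CC where CC: "\<forall>m k. length k = l \<longrightarrow> lhs_coeff l n k m = (\<Sum>\<beta>\<in>Bset l n. CC m \<beta> * epow \<beta> k)"
    by metis
  define G where "G \<beta> m = (if \<beta> \<in> Bset l n then CC m \<beta> else 0)" for \<beta> m
  have "gfam_ok l n G" unfolding gfam_ok_def
  proof (intro conjI allI impI)
    fix \<beta> assume "\<beta> \<notin> Bset l n" then show "G \<beta> = (\<lambda>_. 0)" unfolding G_def by auto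
  next
    fix k :: "complex list" and m assume k: "length k = l"
    show "lhs_coeff l n k m = (\<Sum>\<beta>\<in>Bset l n. epow \<beta> k * G \<beta> m)"
      using CC k unfolding G_def by (simp add: mult.commute)
  qed
  then show "\<exists>G. gfam_ok l n G" by blast
next
  fix G1 G2 assume G1: "gfam_ok l n G1" and G2: "gfam_ok l n G2"
  show "G1 = G2"
  proof (intro ext)
    fix \<beta> m
    show "G1 \<beta> m = G2 \<beta> m"
    proof (cases "\<beta> \<in> Bset l n")
      case False
      have "G1 \<beta> = (\<lambda>_. 0)" "G2 \<beta> = (\<lambda>_. 0)" using G1 G2 False unfolding gfam_ok_def by blast+
      then show ?thesis by simp
    next
      case True
      have "\<forall>k. length k = l \<longrightarrow> (\<Sum>\<gamma>\<in>Bset l n. (G1 \<gamma> m - G2 \<gamma> m) * epow \<gamma> k) = 0"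
      proof (intro allI impI)
        fix k :: "complex list" assume k: "length k = l"
        have "(\<Sum>\<gamma>\<in>Bset l n. (G1 \<gamma> m - G2 \<gamma> m) * epow \<gamma> k) =
              (\<Sum>\<gamma>\<in>Bset l n. epow \<gamma> k * G1 \<gamma> m) - (\<Sum>\<gamma>\<in>Bset l n. epow \<gamma> k * G2 \<gamma> m)"
          by (simp add: sum_subtractf algebra_simps)
        moreover have "lhs_coeff l n k m = (\<Sum>\<gamma>\<in>Bset l n. epow \<gamma> k * G1 \<gamma> m)"
          using G1 k unfolding gfam_ok_def by blast
        moreover have "lhs_coeff l n k m = (\<Sum>\<gamma>\<in>Bset l n. epow \<gamma> k * G2 \<gamma> m)"
          using G2 k unfolding gfam_ok_def by blast
        ultimately show "(\<Sum>\<gamma>\<in>Bset l n. (G1 \<gamma> m - G2 \<gamma> m) * epow \<gamma> k) = 0"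
          by simp
      qed
      then have "G1 \<beta> m - G2 \<beta> m = 0"
        by (rule epow_indep[OF Bset_finite Bset_len _ True])
      then show ?thesis by simp
    qed
  qed
qed

lemma gfam_g:
  assumes "1 \<le> l"
  shows "gfam_ok l n (g l n)"
proof -
  have "g l n = (THE G. gfam_ok l n G)" unfolding g_def by (rule ext) simp
  then show ?thesis using theI'[OF gfam_ex1[OF assms]] by simp
qed

lemma g_out: "1 \<le> l \<Longrightarrow> \<beta> \<notin> Bset l n \<Longrightarrow> g l n \<beta> m = 0"
  using gfam_g[of l n] unfolding gfam_ok_def by simp

lemma g_id: "1 \<le> l \<Longrightarrow> length k = l \<Longrightarrow> lhs_coeff l n k m = (\<Sum>\<beta>\<in>Bset l n. epow \<beta> k * g l n \<beta> m)"
  using gfam_g[of l n] unfolding gfam_ok_def by simp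

lemma g_supp:
  assumes l: "1 \<le> l" and nz: "g l n \<beta> m \<noteq> 0"
  shows "\<exists>c\<in>comps l n. mset c = m"
proof (rule ccontr)
  assume a: "\<not> (\<exists>c\<in>comps l n. mset c = m)"
  then have eqA: "{c \<in> comps l n. mset c = m} = {}" by auto
  have z: "lhs_coeff l n k m = 0" for k unfolding lhs_coeff_def eqA by simp
  have b: "\<beta> \<in> Bset l n" using nz g_out[OF l] by blast
  have "\<forall>k. length k = l \<longrightarrow> (\<Sum>\<gamma>\<in>Bset l n. g l n \<gamma> m * epow \<gamma> k) = 0"
  proof (intro allI impI)
    fix k :: "complex list" assume k: "length k = l"
    have "(\<Sum>\<gamma>\<in>Bset l n. g l n \<gamma> m * epow \<gamma> k) = (\<Sum>\<gamma>\<in>Bset l n. epow \<gamma> k * g l n \<gamma> m)"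
      by (simp add: mult.commute)
    also have "\<dots> = 0" using g_id[OF l k, of n m] z[of k] by simp
    finally show "(\<Sum>\<gamma>\<in>Bset l n. g l n \<gamma> m * epow \<gamma> k) = 0" .
  qed
  then have "g l n \<beta> m = 0"
    by (rule epow_indep[OF Bset_finite Bset_len _ b])
  then show False using nz by simp
qed

lemma g_deg: "1 \<le> l \<Longrightarrow> g l n \<beta> m \<noteq> 0 \<Longrightarrow> deg m = n"
  using g_supp[of l n \<beta> m] unfolding deg_def comps_def by (auto simp: sum_mset_sum_list)

lemma g_valid: "1 \<le> l \<Longrightarrow> 0 \<in># m \<Longrightarrow> g l n \<beta> m = 0"
  using g_supp[of l n \<beta> m] unfolding comps_def by fastforce

lemma g_finite: "1 \<le> l \<Longrightarrow> finite {m. g l n \<beta> m \<noteq> 0}"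
proof -
  assume l: "1 \<le> l"
  have "{m. g l n \<beta> m \<noteq> 0} \<subseteq> mset ` comps l n" using g_supp[OF l] by blast
  then show ?thesis using comps_finite finite_subset by blast
qed



lemma prod_upd:
  assumes "length c = l" "i < l"
  shows "k ! i * (\<Prod>t<l. (k ! t) ^ (c ! t)) = (\<Prod>t<l. (k ! t) ^ (c[i := c ! i + 1] ! t))"
proof -
  have "(\<Prod>t<l. (k ! t) ^ (c[i := c ! i + 1] ! t)) = (\<Prod>t<l. (if t = i then k ! i else 1) * (k ! t) ^ (c ! t))"
    using assms by (intro prod.cong refl) (auto simp: nth_list_update)
  also have "\<dots> = k ! i * (\<Prod>t<l. (k ! t) ^ (c ! t))"
    unfolding prod.distrib using assms by (simp add: prod.delta)
  finally show ?thesis by simp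
qed

lemma sum_list_upd_nat: "i < length c \<Longrightarrow> sum_list (c[i := x]) + c ! i = sum_list c + (x :: nat)"
  by (induction c arbitrary: i) (auto split: nat.split)

lemma card_idx: "length c = l \<Longrightarrow> card {i. i < l \<and> c ! i = x} = count (mset c) x"
  by (simp add: count_mset count_list_eq_length_filter length_filter_conv_card eq_commute)

lemma dop_lhs:
  assumes k: "length k = l"
  shows "dop (\<lambda>m. lhs_coeff l (Suc N) k m) m' = esym 1 k * lhs_coeff l N k m'"
proof -
  define P where "P c = (\<Prod>t<l. (k ! t) ^ (c ! t))" for c :: "nat list"
  define J where "J = set_mset m' - {0}"
  define C' where "C' j = {c \<in> comps l (Suc N). mset c = m' - {#j#} + {#Suc j#}}" for j
  define I where "I c j = {i. i < l \<and> c ! i = Suc j}" for c j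
  define C where "C = {c \<in> comps l N. mset c = m'}"
  define T where "T = (SIGMA j:J. SIGMA c:C' j. I c j)"
  define S where "S = {..<l} \<times> C"
  have finJ: "finite J" unfolding J_def by simp
  have finC': "finite (C' j)" for j unfolding C'_def using comps_finite by simp
  have finI: "finite (I c j)" for c j unfolding I_def by simp
  have step1: "of_nat (count m' (Suc j) + 1) * (\<Sum>c\<in>C' j. P c) = (\<Sum>c\<in>C' j. \<Sum>i\<in>I c j. P c)"
    if j: "j \<in> J" for j
  proof -
    have "card (I c j) = count m' (Suc j) + 1" if c: "c \<in> C' j" for c
    proof -
      have "length c = l" "mset c = m' - {#j#} + {#Suc j#}" using c unfolding C'_def comps_def by auto
      then show ?thesis unfolding I_def by (simp add: card_idx)
    qed
    then show ?thesis by (simp add: sum_distrib_left)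
  qed
  have "dop (\<lambda>m. lhs_coeff l (Suc N) k m) m' = (\<Sum>j\<in>J. of_nat (count m' (Suc j) + 1) * (\<Sum>c\<in>C' j. P c))"
    unfolding dop_def lhs_coeff_def J_def C'_def P_def by simp
  also have "\<dots> = (\<Sum>j\<in>J. \<Sum>c\<in>C' j. \<Sum>i\<in>I c j. P c)" using step1 by (intro sum.cong refl) auto
  also have "\<dots> = (\<Sum>j\<in>J. \<Sum>(c, i)\<in>(SIGMA c:C' j. I c j). P c)"
  proof (rule sum.cong[OF refl])
    fix j
    show "(\<Sum>c\<in>C' j. \<Sum>i\<in>I c j. P c) = (\<Sum>(c, i)\<in>(SIGMA c:C' j. I c j). P c)"
      using finC' finI by (rule_tac sum.Sigma) auto
  qed
  also have "\<dots> = (\<Sum>(j, ci)\<in>T. P (fst ci))"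
    unfolding T_def using finJ finC' finI
    by (subst sum.Sigma) (auto simp: case_prod_beta intro!: finite_SigmaI)
  finally have L: "dop (\<lambda>m. lhs_coeff l (Suc N) k m) m' = (\<Sum>(j, ci)\<in>T. P (fst ci))" .
  have "esym 1 k * lhs_coeff l N k m' = (\<Sum>i<l. k ! i) * (\<Sum>c\<in>C. P c)"
    unfolding esym_one lhs_coeff_def C_def P_def using k by simp
  also have "\<dots> = (\<Sum>(i, c)\<in>S. k ! i * P c)"
    unfolding S_def sum_product sum.cartesian_product by simp
  also have "\<dots> = (\<Sum>(i, c)\<in>S. P (c[i := c ! i + 1]))"
    unfolding S_def C_def P_def comps_def by (intro sum.cong refl) (auto simp: prod_upd)
  also have "\<dots> = (\<Sum>(j, ci)\<in>T. P (fst ci))"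
  proof (rule sum.reindex_bij_witness[of S "\<lambda>(j, c, i). (i, c[i := j])" "\<lambda>(i, c). (c ! i, c[i := c ! i + 1], i)"])
    fix a assume a: "a \<in> S"
    obtain i c where ic: "a = (i, c)" by (cases a)
    have i: "i < l" and c: "c \<in> comps l N" "mset c = m'" using a ic unfolding S_def C_def by auto
    have lc: "length c = l" using c unfolding comps_def by simp
    have ci1: "1 \<le> c ! i" using c i lc unfolding comps_def by auto
    have cim: "c ! i \<in># m'" using c i lc by (metis in_multiset_in_set nth_mem)
    show "(\<lambda>(j, c, i). (i, c[i := j])) ((\<lambda>(i, c). (c ! i, c[i := c ! i + 1], i)) a) = a"
      using ic by simp
    show "(\<lambda>(i, c). (c ! i, c[i := c ! i + 1], i)) a \<in> T"
    proof -
      have "c ! i \<in> J" unfolding J_def using cim ci1 by auto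
      moreover have "c[i := c ! i + 1] \<in> C' (c ! i)"
      proof -
        have "sum_list (c[i := c ! i + 1]) = Suc N"
          using sum_list_upd_nat[of i c "c ! i + 1"] i lc c unfolding comps_def by simp
        moreover have "\<forall>x\<in>set (c[i := c ! i + 1]). 1 \<le> x"
          using set_update_subset_insert[of c i "c ! i + 1"] c unfolding comps_def by auto
        moreover have "mset (c[i := c ! i + 1]) = m' - {#c ! i#} + {#Suc (c ! i)#}"
          using mset_update[of i c] i lc c by simp
        ultimately show ?thesis unfolding C'_def comps_def using lc by simp
      qed
      moreover have "i \<in> I (c[i := c ! i + 1]) (c ! i)" unfolding I_def using i lc by simp
      ultimately show ?thesis unfolding T_def using ic by simp
    qed
    show "(\<lambda>(j, ci). P (fst ci)) ((\<lambda>(i, c). (c ! i, c[i := c ! i + 1], i)) a) =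
          (\<lambda>(i, c). P (c[i := c ! i + 1])) a" using ic by simp
  next
    fix b assume b: "b \<in> T"
    obtain j c i where jci: "b = (j, c, i)" by (cases b) auto
    have j: "j \<in> J" and c: "c \<in> C' j" and i: "i \<in> I c j" using b jci unfolding T_def by auto
    have lc: "length c = l" and cc: "c \<in> comps l (Suc N)" "mset c = m' - {#j#} + {#Suc j#}"
      using c unfolding C'_def comps_def by auto
    have il: "i < l" and cij: "c ! i = Suc j" using i unfolding I_def by auto
    have j1: "1 \<le> j" and jm: "j \<in># m'" using j unfolding J_def by auto
    show "(\<lambda>(i, c). (c ! i, c[i := c ! i + 1], i)) ((\<lambda>(j, c, i). (i, c[i := j])) b) = b"
    proof -
      have "c[i := Suc j] = c" using cij by (metis list_update_id)
      then show ?thesis using jci il lc cij by simp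
    qed
    show "(\<lambda>(j, c, i). (i, c[i := j])) b \<in> S"
    proof -
      have "sum_list (c[i := j]) = N"
        using sum_list_upd_nat[of i c j] il lc cc cij unfolding comps_def by simp
      moreover have "\<forall>x\<in>set (c[i := j]). 1 \<le> x"
        using set_update_subset_insert[of c i j] cc j1 unfolding comps_def by auto
      moreover have "mset (c[i := j]) = m'"
        using mset_update[of i c j] il lc cc cij jm by simp
      ultimately have "c[i := j] \<in> C" unfolding C_def comps_def using lc by simp
      then show ?thesis unfolding S_def using jci il by simp
    qed
  qed
  finally show ?thesis using L by simp
qed

lemma dop_sum:
  assumes "finite B"
  shows "dop (\<lambda>m. \<Sum>\<beta>\<in>B. a \<beta> * F \<beta> m) m' = (\<Sum>\<beta>\<in>B. a \<beta> * dop (F \<beta>) m')"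
  unfolding dop_def by (simp add: sum_distrib_left sum.swap[of _ B] mult_ac)



lemma wt_upd_add:
  assumes "j < length \<beta>"
  shows "wt (\<beta>[j := \<beta> ! j + a]) = wt \<beta> + (j + 1) * a"
proof -
  have "wt (\<beta>[j := \<beta> ! j + a]) = (\<Sum>i<length \<beta>. (i + 1) * \<beta> ! i + (if i = j then (j + 1) * a else 0))"
    unfolding wt_def by (intro sum.cong refl) (auto simp: nth_list_update algebra_simps)
  also have "\<dots> = wt \<beta> + (j + 1) * a"
    unfolding sum.distrib wt_def using assms by (simp add: sum.delta)
  finally show ?thesis .
qed

lemma d_rel:
  assumes l: "1 \<le> l" and \<gamma>: "\<gamma> \<in> Bset l (Suc N)"
  shows "dop (g l (Suc N) \<gamma>) m' = (if 1 \<le> \<gamma> ! 0 then g l N (\<gamma>[0 := \<gamma> ! 0 - 1]) m' else 0)"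
proof -
  define H where "H \<gamma> = (if 1 \<le> \<gamma> ! 0 then g l N (\<gamma>[0 := \<gamma> ! 0 - 1]) m' else 0)" for \<gamma> :: "nat list"
  define sh where "sh \<delta> = \<delta>[0 := \<delta> ! 0 + 1]" for \<delta> :: "nat list"
  have shB: "sh \<delta> \<in> Bset l (Suc N)" if d: "\<delta> \<in> Bset l N" for \<delta>
  proof -
    have ld: "length \<delta> = l" "1 \<le> \<delta> ! (l - 1)" "wt \<delta> = N" using d unfolding Bset_wt by auto
    have "wt (sh \<delta>) = wt \<delta> + (0 + 1)" unfolding sh_def using ld l by (intro wt_upd) auto
    moreover have "1 \<le> sh \<delta> ! (l - 1)" using ld l unfolding sh_def by (cases "l - 1 = 0") (auto simp: nth_list_update)
    ultimately show ?thesis using ld l unfolding Bset_wt sh_def by auto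
  qed
  have injsh: "inj_on sh (Bset l N)"
  proof (rule inj_onI)
    fix x y assume x: "x \<in> Bset l N" and y: "y \<in> Bset l N" and e: "sh x = sh y"
    have lx: "length x = l" and ly: "length y = l" using x y unfolding Bset_def by auto
    show "x = y"
    proof (rule nth_equalityI)
      show "length x = length y" using lx ly by simp
      fix i assume i: "i < length x"
      have "sh x ! i = sh y ! i" using e by simp
      then show "x ! i = y ! i" using i lx ly l unfolding sh_def
        by (cases "i = 0") (auto simp: nth_list_update)
    qed
  qed
  have Hsh: "H (sh \<delta>) = g l N \<delta> m'" if d: "\<delta> \<in> Bset l N" for \<delta>
  proof -
    have ld: "length \<delta> = l" using d unfolding Bset_def by auto
    then have "sh \<delta> ! 0 = \<delta> ! 0 + 1" using l unfolding sh_def by simp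
    moreover have "(sh \<delta>)[0 := \<delta> ! 0] = \<delta>" unfolding sh_def by simp
    ultimately show ?thesis unfolding H_def by simp
  qed
  have Hout: "H \<gamma> = 0" if g1: "\<gamma> \<in> Bset l (Suc N)" and g2: "\<gamma> \<notin> sh ` Bset l N" for \<gamma>
  proof (cases "1 \<le> \<gamma> ! 0")
    case True
    have lg: "length \<gamma> = l" using g1 unfolding Bset_def by auto
    have "sh (\<gamma>[0 := \<gamma> ! 0 - 1]) = \<gamma>" unfolding sh_def using True lg l by simp
    then have "\<gamma>[0 := \<gamma> ! 0 - 1] \<notin> Bset l N" using g2 by force
    then show ?thesis unfolding H_def using g_out[OF l] by simp
  next
    case False then show ?thesis unfolding H_def by simp
  qed
  have main: "\<forall>k. length k = l \<longrightarrow> (\<Sum>\<gamma>\<in>Bset l (Suc N). (dop (g l (Suc N) \<gamma>) m' - H \<gamma>) * epow \<gamma> k) = 0"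
  proof (intro allI impI)
    fix k :: "complex list" assume k: "length k = l"
    have "(\<Sum>\<gamma>\<in>Bset l (Suc N). dop (g l (Suc N) \<gamma>) m' * epow \<gamma> k)
        = (\<Sum>\<gamma>\<in>Bset l (Suc N). epow \<gamma> k * dop (g l (Suc N) \<gamma>) m')" by (simp add: mult.commute)
    also have "\<dots> = dop (\<lambda>m. \<Sum>\<gamma>\<in>Bset l (Suc N). epow \<gamma> k * g l (Suc N) \<gamma> m) m'"
      by (rule dop_sum[symmetric]) (rule Bset_finite)
    also have "(\<lambda>m. \<Sum>\<gamma>\<in>Bset l (Suc N). epow \<gamma> k * g l (Suc N) \<gamma> m) = (\<lambda>m. lhs_coeff l (Suc N) k m)"
      using g_id[OF l k] by simp
    also have "dop (\<lambda>m. lhs_coeff l (Suc N) k m) m' = esym 1 k * lhs_coeff l N k m'"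
      by (rule dop_lhs[OF k])
    also have "\<dots> = (\<Sum>\<delta>\<in>Bset l N. esym 1 k * epow \<delta> k * g l N \<delta> m')"
      using g_id[OF l k, of N m'] by (simp add: sum_distrib_left mult.assoc)
    also have "\<dots> = (\<Sum>\<delta>\<in>Bset l N. epow (sh \<delta>) k * H (sh \<delta>))"
    proof (intro sum.cong refl)
      fix \<delta> assume d: "\<delta> \<in> Bset l N"
      have "length \<delta> = l" using d unfolding Bset_def by auto
      then have "epow (sh \<delta>) k = esym (0 + 1) k * epow \<delta> k" unfolding sh_def using l by (intro epow_upd) auto
      then show "esym 1 k * epow \<delta> k * g l N \<delta> m' = epow (sh \<delta>) k * H (sh \<delta>)" using Hsh[OF d] by simp
    qed
    also have "\<dots> = (\<Sum>\<gamma>\<in>sh ` Bset l N. epow \<gamma> k * H \<gamma>)"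
      using injsh by (simp add: sum.reindex)
    also have "\<dots> = (\<Sum>\<gamma>\<in>Bset l (Suc N). epow \<gamma> k * H \<gamma>)"
      by (rule sum.mono_neutral_left[OF Bset_finite]) (use shB Hout in auto)
    finally have "(\<Sum>\<gamma>\<in>Bset l (Suc N). dop (g l (Suc N) \<gamma>) m' * epow \<gamma> k) = (\<Sum>\<gamma>\<in>Bset l (Suc N). H \<gamma> * epow \<gamma> k)"
      by (simp add: mult.commute)
    then show "(\<Sum>\<gamma>\<in>Bset l (Suc N). (dop (g l (Suc N) \<gamma>) m' - H \<gamma>) * epow \<gamma> k) = 0"
      by (simp add: left_diff_distrib sum_subtractf)
  qed
  have "dop (g l (Suc N) \<gamma>) m' - H \<gamma> = 0"
    by (rule epow_indep[OF Bset_finite Bset_len main \<gamma>])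
  then show ?thesis unfolding H_def by simp
qed

lemma Bi_Bset: "1 \<le> l \<Longrightarrow> Bi l n i \<subseteq> Bset l n"
  unfolding Bi_def Bset_def by auto

lemma bs_eq: "\<beta> \<noteq> [] \<Longrightarrow> beta_shift \<beta> i = \<beta>[0 := \<beta> ! 0 + i]"
  by (cases \<beta>) (auto simp: beta_shift_def)

lemma part1:
  assumes l: "1 \<le> l" and b: "\<beta> \<in> Bi l n 0"
  shows "beta_shift \<beta> i \<in> Bi l (n + i) i"
proof (cases "l = 1")
  case True
  then have "n = 1" "\<beta> = [1]" using b unfolding Bi_def by (auto split: if_splits)
  then show ?thesis using True unfolding Bi_def beta_shift_def by simp
next
  case False
  then have bB: "\<beta> \<in> Bset l n" and b0: "\<beta> ! 0 = 0" using b unfolding Bi_def by auto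
  have lb: "length \<beta> = l" "1 \<le> \<beta> ! (l - 1)" "wt \<beta> = n" using bB unfolding Bset_wt by auto
  have ne: "\<beta> \<noteq> []" using lb l by auto
  have "wt (\<beta>[0 := \<beta> ! 0 + i]) = wt \<beta> + (0 + 1) * i" using lb l by (intro wt_upd_add) auto
  moreover have "\<beta>[0 := \<beta> ! 0 + i] ! (l - 1) = \<beta> ! (l - 1)" using False l by simp
  moreover have "\<beta>[0 := \<beta> ! 0 + i] ! 0 = i" using lb l b0 by simp
  ultimately show ?thesis using False lb l ne unfolding Bi_def Bset_wt by (simp add: bs_eq)
qed

lemma deg_shift: "j \<in># m \<Longrightarrow> deg (m - {#j#} + {#Suc j#}) = Suc (deg m)"
proof -
  assume j: "j \<in># m"
  have e: "add_mset j (m - {#j#}) = m" using j by simp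
  have "sum_mset (add_mset j (m - {#j#})) = j + sum_mset (m - {#j#})" by simp
  then have "sum_mset m = j + sum_mset (m - {#j#})" unfolding e .
  then show ?thesis unfolding deg_def by simp
qed

theorem proposition3p3:
  fixes l n :: nat and \<beta> :: "nat list"
  assumes "1 \<le> l" and "l \<le> n" and "\<beta> \<in> Bi l n 0"
  shows "(\<forall>i. beta_shift \<beta> i \<in> Bi l (n + i) i) \<and> is_lift n (g l n \<beta>) (gtilde l n \<beta>)"
proof -
  note l = assms(1)
  have P1: "\<forall>i. beta_shift \<beta> i \<in> Bi l (n + i) i" using part1[OF l assms(3)] by blast
  have shB: "beta_shift \<beta> i \<in> Bset l (n + i)" for i using P1 Bi_Bset[OF l] by blast
  have bB: "\<beta> \<in> Bset l n" using assms(3) Bi_Bset[OF l] by auto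
  have lb: "length \<beta> = l" using bB unfolding Bset_def by simp
  have ne: "\<beta> \<noteq> []" using lb l by auto
  have b0: "beta_shift \<beta> 0 = \<beta>" using ne by (simp add: bs_eq)
  have sh0: "beta_shift \<beta> i ! 0 = \<beta> ! 0 + i" for i using ne by (simp add: bs_eq)
  have shdown: "(beta_shift \<beta> (Suc i))[0 := beta_shift \<beta> (Suc i) ! 0 - 1] = beta_shift \<beta> i" for i
    using ne by (simp add: bs_eq)
  obtain N where nN: "n = Suc N" using assms(1,2) by (cases n) auto
  have dg0: "dop (g l n \<beta>) m' = 0" for m'
  proof -
    have "dop (g l n \<beta>) m' = (if 1 \<le> \<beta> ! 0 then g l N (\<beta>[0 := \<beta> ! 0 - 1]) m' else 0)"
      using d_rel[OF l, of \<beta> N m'] bB nN by simp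
    also have "\<dots> = 0"
    proof (cases "1 \<le> \<beta> ! 0")
      case True
      then have "l = 1" using assms(3) unfolding Bi_def by (auto split: if_splits)
      moreover have "\<beta> = [1]" using assms(3) \<open>l = 1\<close> unfolding Bi_def by (auto split: if_splits)
      ultimately have "\<beta>[0 := \<beta> ! 0 - 1] \<notin> Bset l N" unfolding Bset_def by simp
      then show ?thesis using g_out[OF l] by simp
    qed simp
    finally show ?thesis .
  qed
  have gt: "gtilde l n \<beta> m = (if n \<le> deg m then g l (deg m) (beta_shift \<beta> (deg m - n)) m else 0)" for m
  proof -
    define X where "X = (if n \<le> deg m then g l (deg m) (beta_shift \<beta> (deg m - n)) m else 0)"
    have s: "g l (n + i) (beta_shift \<beta> i) m = (if i = deg m - n then X else 0)" for i
    proof (cases "i = deg m - n")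
      case True
      show ?thesis
      proof (cases "n \<le> deg m")
        case True
        then show ?thesis using \<open>i = deg m - n\<close> unfolding X_def by simp
      next
        case False
        then have "i = 0" using \<open>i = deg m - n\<close> by simp
        moreover have "g l n \<beta> m = 0" using g_deg[OF l, of n \<beta> m] False by auto
        ultimately show ?thesis using False b0 unfolding X_def by simp
      qed
    next
      case False
      then have "g l (n + i) (beta_shift \<beta> i) m = 0" using g_deg[OF l, of "n + i" _ m] by fastforce
      then show ?thesis using False by simp
    qed
    have "(\<lambda>i. g l (n + i) (beta_shift \<beta> i) m) sums X"
      unfolding s using sums_single[of "deg m - n" "\<lambda>_. X"] by simp
    then show ?thesis unfolding gtilde_def X_def by (rule sums_unique[symmetric])
  qed
  have lift: "is_lift n (g l n \<beta>) (gtilde l n \<beta>)"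
    unfolding is_lift_def J_deg_def valid_series_def
  proof (intro conjI allI impI CollectI)
    show "0 < n" using nN by simp
    show "\<And>m. 0 \<in># m \<Longrightarrow> g l n \<beta> m = 0" using g_valid[OF l] by blast
    show "finite {m. g l n \<beta> m \<noteq> 0}" using g_finite[OF l] .
    show "\<And>m. g l n \<beta> m \<noteq> 0 \<Longrightarrow> deg m = n" using g_deg[OF l] by blast
    show "dop (g l n \<beta>) = (\<lambda>_. 0)" using dg0 by (intro ext) simp
    show "\<And>m. 0 \<in># m \<Longrightarrow> gtilde l n \<beta> m = 0" using gt g_valid[OF l] by simp
    show "\<And>m. deg m \<le> n \<Longrightarrow> gtilde l n \<beta> m = g l n \<beta> m"
    proof -
      fix m assume "deg m \<le> n"
      then show "gtilde l n \<beta> m = g l n \<beta> m"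
        using gt[of m] b0 g_deg[OF l, of n \<beta> m] by (cases "deg m = n") auto
    qed
    show "dop (gtilde l n \<beta>) = gtilde l n \<beta>"
    proof (rule ext)
      fix m'
      define D where "D = deg m'"
      define Y where "Y = g l (Suc D) (beta_shift \<beta> (Suc D - n))"
      have gj: "gtilde l n \<beta> (m' - {#j#} + {#Suc j#}) = (if n \<le> Suc D then Y (m' - {#j#} + {#Suc j#}) else 0)"
        if j: "j \<in> set_mset m' - {0}" for j
      proof -
        have "deg (m' - {#j#} + {#Suc j#}) = Suc D" using j deg_shift[of j m'] D_def by simp
        then show ?thesis unfolding Y_def by (subst gt) simp
      qed
      have "dop (gtilde l n \<beta>) m' = (\<Sum>j\<in>set_mset m' - {0}. of_nat (count m' (Suc j) + 1) * (if n \<le> Suc D then Y (m' - {#j#} + {#Suc j#}) else 0))"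
        unfolding dop_def by (rule sum.cong[OF refl]) (simp only: gj)
      also have "\<dots> = (if n \<le> Suc D then dop Y m' else 0)"
        unfolding dop_def by (cases "n \<le> Suc D") simp_all
      finally have "dop (gtilde l n \<beta>) m' = (if n \<le> Suc D then dop Y m' else 0)" .
      also have "\<dots> = gtilde l n \<beta> m'"
      proof (cases "n \<le> D")
        case True
        then have e: "Suc D - n = Suc (D - n)" by simp
        have yB: "beta_shift \<beta> (Suc (D - n)) \<in> Bset l (Suc D)" using shB[of "Suc (D - n)"] True by simp
        have "dop Y m' = g l D (beta_shift \<beta> (D - n)) m'"
          unfolding Y_def e using d_rel[OF l yB, of m'] sh0 shdown by simp
        then show ?thesis using True gt[of m'] unfolding D_def by simp
      next
        case False
        show ?thesis
        proof (cases "n = Suc D")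
          case True
          then have "dop Y m' = 0" unfolding Y_def using dg0 b0 by simp
          then show ?thesis using True gt[of m'] unfolding D_def by simp
        next
          case False
          then show ?thesis using \<open>\<not> n \<le> D\<close> gt[of m'] unfolding D_def by simp
        qed
      qed
      finally show "dop (gtilde l n \<beta>) m' = gtilde l n \<beta> m'" .
    qed
  qed
  show ?thesis using P1 lift by blast
qed

end
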